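(* Let $G$ be an $r$-regular graph with $n$ vertices, $m$ edges and $r\ge 2$, and let $\mathcal Q(G)$ be its Q-graph. Let $a,b$ be distinct vertices of $\mathcal Q(G)$ with either $a,b\in V(G)$ or $a,b\in I(G)$. Then for each Laplacian eigenvalue $\theta\neq 2r$ of $G$, $\theta^{+}\in \mathrm{supp}_{L_{\mathcal Q(G)}}(\mathbf e_a-\mathbf e_b)$ if and only if $\theta^{-}\in \mathrm{supp}_{L_{\mathcal Q(G)}}(\mathbf e_a-\mathbf e_b)$. Moreover, if $\mathbf e_a-\mathbf e_b$ and $\mathbf e_c-\mathbf e_d$ are two pair states of $\mathcal Q(G)$ that are Laplacian strongly cospectral, then $\theta^+\in\Lambda^+_{ab,cd}$ if and only if $\theta^-\in\Lambda^+_{ab,cd}$, and $\theta^+\in\Lambda^-_{ab,cd}$ if and only if $\theta^-\in\Lambda^-_{ab,cd}$.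
   Context: For a simple graph $H$, $L_H=D_H-A_H$ is its Laplacian (degree matrix minus adjacency matrix), and $L_H=\sum_\theta \theta F_\theta$ its spectral decomposition over distinct eigenvalues, with $F_\theta$ the orthogonal projection onto the $\theta$-eigenspace. $\mathbf e_u$ is the characteristic vector of vertex $u$; for distinct vertices $a,b$, $\mathbf e_a-\mathbf e_b$ is a pair state, and $\mathrm{supp}_{L_H}(\mathbf e_a-\mathbf e_b)=\{\theta: F_\theta(\mathbf e_a-\mathbf e_b)\neq \mathbf 0\}$. Two pair states $\mathbf e_a-\mathbf e_b$, $\mathbf e_c-\mathbf e_d$ are Laplacian strongly cospectral if $F_\theta(\mathbf e_a-\mathbf e_b)=\pm F_\theta(\mathbf e_c-\mathbf e_d)$ for every eigenvalue $\theta$ of $L_H$. Set $\Lambda^{\pm}_{ab,cd}=\{\theta\in\mathrm{supp}_{L_H}(\mathbf e_a-\mathbf e_b): F_\theta(\mathbf e_a-\mathbf e_b)=\pm F_\theta(\mathbf e_c-\mathbf e_d)\}$ (here $H=\mathcal Q(G)$). The Q-graph $\mathcal Q(G)$ is obtained from $G$ by inserting a new vertex into each edge of $G$ and joining by an edge each pair of new vertices lying on adjacent (incident) edges of $G$; the set of new vertices is $I(G)$, so $V(\mathcal Q(G))=V(G)\cup I(G)$. For a Laplacian eigenvalue $\theta$ of $G$, $\theta^{\pm}=\frac12\big(\theta+2+r\pm\sqrt{(r+2-\theta)^2+4\theta}\big)$; these are Laplacian eigenvalues of $\mathcal Q(G)$. *)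

theory Defs
  imports Complex_Main
begin

definition simple_graph :: "'v set \<Rightarrow> ('v \<Rightarrow> 'v \<Rightarrow> bool) \<Rightarrow> bool" where
  "simple_graph V E \<longleftrightarrow> finite V \<and> (\<forall>u v. E u v \<longrightarrow> u \<in> V \<and> v \<in> V \<and> u \<noteq> v \<and> E v u)"

definition degree :: "'v set \<Rightarrow> ('v \<Rightarrow> 'v \<Rightarrow> bool) \<Rightarrow> 'v \<Rightarrow> nat" where
  "degree V E u = card {w \<in> V. E u w}"

definition regular_graph :: "'v set \<Rightarrow> ('v \<Rightarrow> 'v \<Rightarrow> bool) \<Rightarrow> nat \<Rightarrow> bool" where
  "regular_graph V E r \<longleftrightarrow> simple_graph V E \<and> (\<forall>v\<in>V. degree V E v = r)"

definition laplacian :: "'v set \<Rightarrow> ('v \<Rightarrow> 'v \<Rightarrow> bool) \<Rightarrow> ('v \<Rightarrow> real) \<Rightarrow> ('v \<Rightarrow> real)" where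
  "laplacian V E x = (\<lambda>u. if u \<in> V then real (degree V E u) * x u - (\<Sum>w\<in>{w\<in>V. E u w}. x w) else 0)"

definition vecs :: "'v set \<Rightarrow> ('v \<Rightarrow> real) set" where
  "vecs V = {x. \<forall>u. u \<notin> V \<longrightarrow> x u = 0}"

definition vinner :: "'v set \<Rightarrow> ('v \<Rightarrow> real) \<Rightarrow> ('v \<Rightarrow> real) \<Rightarrow> real" where
  "vinner V x y = (\<Sum>u\<in>V. x u * y u)"

definition lap_eigenspace :: "'v set \<Rightarrow> ('v \<Rightarrow> 'v \<Rightarrow> bool) \<Rightarrow> real \<Rightarrow> ('v \<Rightarrow> real) set" where
  "lap_eigenspace V E \<theta> = {x \<in> vecs V. laplacian V E x = (\<lambda>u. \<theta> * x u)}"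

definition lap_eigenvalue :: "'v set \<Rightarrow> ('v \<Rightarrow> 'v \<Rightarrow> bool) \<Rightarrow> real \<Rightarrow> bool" where
  "lap_eigenvalue V E \<theta> \<longleftrightarrow> (\<exists>x \<in> lap_eigenspace V E \<theta>. x \<noteq> (\<lambda>_. 0))"

definition eig_proj :: "'v set \<Rightarrow> ('v \<Rightarrow> 'v \<Rightarrow> bool) \<Rightarrow> real \<Rightarrow> ('v \<Rightarrow> real) \<Rightarrow> ('v \<Rightarrow> real)" where
  "eig_proj V E \<theta> x = (THE y. y \<in> lap_eigenspace V E \<theta> \<and>
      (\<forall>w \<in> lap_eigenspace V E \<theta>. vinner V (\<lambda>u. x u - y u) w = 0))"

definition char_vec :: "'v \<Rightarrow> ('v \<Rightarrow> real)" where
  "char_vec a = (\<lambda>u. if u = a then 1 else 0)"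

definition pair_state :: "'v \<Rightarrow> 'v \<Rightarrow> ('v \<Rightarrow> real)" where
  "pair_state a b = (\<lambda>u. char_vec a u - char_vec b u)"

definition lap_supp :: "'v set \<Rightarrow> ('v \<Rightarrow> 'v \<Rightarrow> bool) \<Rightarrow> ('v \<Rightarrow> real) \<Rightarrow> real set" where
  "lap_supp V E x = {\<theta>. lap_eigenvalue V E \<theta> \<and> eig_proj V E \<theta> x \<noteq> (\<lambda>_. 0)}"

definition lap_strongly_cospectral ::
  "'v set \<Rightarrow> ('v \<Rightarrow> 'v \<Rightarrow> bool) \<Rightarrow> 'v \<Rightarrow> 'v \<Rightarrow> 'v \<Rightarrow> 'v \<Rightarrow> bool" where
  "lap_strongly_cospectral V E a b c d \<longleftrightarrow>
     (\<forall>\<theta>. lap_eigenvalue V E \<theta> \<longrightarrow>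
        eig_proj V E \<theta> (pair_state a b) = eig_proj V E \<theta> (pair_state c d) \<or>
        eig_proj V E \<theta> (pair_state a b) = (\<lambda>u. - eig_proj V E \<theta> (pair_state c d) u))"

definition Lambda_plus :: "'v set \<Rightarrow> ('v \<Rightarrow> 'v \<Rightarrow> bool) \<Rightarrow> 'v \<Rightarrow> 'v \<Rightarrow> 'v \<Rightarrow> 'v \<Rightarrow> real set" where
  "Lambda_plus V E a b c d = {\<theta> \<in> lap_supp V E (pair_state a b).
     eig_proj V E \<theta> (pair_state a b) = eig_proj V E \<theta> (pair_state c d)}"

definition Lambda_minus :: "'v set \<Rightarrow> ('v \<Rightarrow> 'v \<Rightarrow> bool) \<Rightarrow> 'v \<Rightarrow> 'v \<Rightarrow> 'v \<Rightarrow> 'v \<Rightarrow> real set" where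
  "Lambda_minus V E a b c d = {\<theta> \<in> lap_supp V E (pair_state a b).
     eig_proj V E \<theta> (pair_state a b) = (\<lambda>u. - eig_proj V E \<theta> (pair_state c d) u)}"

text \<open>Q-graph. Original vertices are Inl v, new (edge) vertices are Inr e for e = {u,v} an edge.\<close>
definition edge_set :: "('v \<Rightarrow> 'v \<Rightarrow> bool) \<Rightarrow> 'v set set" where
  "edge_set E = {{u, v} | u v. E u v}"

definition Q_vertices :: "'v set \<Rightarrow> ('v \<Rightarrow> 'v \<Rightarrow> bool) \<Rightarrow> ('v + 'v set) set" where
  "Q_vertices V E = Inl ` V \<union> Inr ` edge_set E"

definition Q_adj :: "('v \<Rightarrow> 'v \<Rightarrow> bool) \<Rightarrow> ('v + 'v set) \<Rightarrow> ('v + 'v set) \<Rightarrow> bool" where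
  "Q_adj E x y = (case (x, y) of
       (Inl u, Inr e) \<Rightarrow> e \<in> edge_set E \<and> u \<in> e
     | (Inr e, Inl u) \<Rightarrow> e \<in> edge_set E \<and> u \<in> e
     | (Inr e, Inr f) \<Rightarrow> e \<in> edge_set E \<and> f \<in> edge_set E \<and> e \<noteq> f \<and> e \<inter> f \<noteq> {}
     | (Inl _, Inl _) \<Rightarrow> False)"

definition theta_plus :: "nat \<Rightarrow> real \<Rightarrow> real" where
  "theta_plus r \<theta> = (\<theta> + 2 + real r + sqrt ((real r + 2 - \<theta>)^2 + 4 * \<theta>)) / 2"

definition theta_minus :: "nat \<Rightarrow> real \<Rightarrow> real" where
  "theta_minus r \<theta> = (\<theta> + 2 + real r - sqrt ((real r + 2 - \<theta>)^2 + 4 * \<theta>)) / 2"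

end

theory Submission
  imports Defs "HOL-Analysis.Analysis"
begin

lemma coord_cont[continuous_intros]: "continuous_on S (\<lambda>y::'a \<Rightarrow> real. y u)"
  by (rule continuous_on_subset[OF continuous_on_product_coordinates]) simp

lemma box_compact:
  fixes V :: "'a set" and M :: real
  shows "compact {y::'a\<Rightarrow>real. \<forall>u. y u \<in> (if u \<in> V then {-M..M} else {0})}"
proof -
  define S where "S = (\<lambda>u::'a. if u \<in> V then {-M..M} else {0::real})"
  have eq: "{y::'a\<Rightarrow>real. \<forall>u. y u \<in> S u} = PiE UNIV S"
    by (auto simp: PiE_def Pi_def)
  have "compactin (product_topology (\<lambda>i. euclidean) UNIV) (PiE UNIV S)"
    by (subst compactin_PiE) (auto simp: S_def compactin_euclidean_iff)
  then have "compact (PiE UNIV S)"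
    by (metis euclidean_product_topology compactin_euclidean_iff)
  then show ?thesis using eq unfolding S_def by simp
qed

lemma closed_bounded_compact:
  fixes C :: "('a \<Rightarrow> real) set"
  assumes "closed C" "\<And>y u. y \<in> C \<Longrightarrow> u \<notin> V \<Longrightarrow> y u = 0"
    "\<And>y u. y \<in> C \<Longrightarrow> \<bar>y u\<bar> \<le> M"
  shows "compact C"
proof -
  let ?B = "{y::'a\<Rightarrow>real. \<forall>u. y u \<in> (if u \<in> V then {-M..M} else {0})}"
  have "C \<subseteq> ?B"
  proof
    fix y assume y: "y \<in> C"
    show "y \<in> ?B"
    proof (simp, intro allI)
      fix u
      show "(u \<in> V \<longrightarrow> - M \<le> y u \<and> y u \<le> M) \<and> (u \<notin> V \<longrightarrow> y u = 0)"
        using assms(2)[OF y, of u] assms(3)[OF y, of u] by (simp add: abs_le_iff)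
    qed
  qed
  then have "C = C \<inter> ?B" by blast
  moreover have "compact (C \<inter> ?B)" by (rule closed_Int_compact[OF assms(1) box_compact])
  ultimately show ?thesis by simp
qed


lemma quad_nonneg_zero:
  fixes a b :: real
  assumes "\<And>t. 0 \<le> a * t + b * t^2"
  shows "a = 0"
proof (rule ccontr)
  assume a: "a \<noteq> 0"
  define s where "s = \<bar>b\<bar> + 1"
  have pos: "s > 0" unfolding s_def by simp
  define t where "t = - a / s"
  have e1: "a * t = - (a^2) / s" unfolding t_def by (simp add: power2_eq_square)
  have e2: "b * t^2 = b * a^2 / s^2" unfolding t_def by (simp add: power_divide)
  have "a * t + b * t^2 = a^2 * (b - s) / s^2"
    unfolding e1 e2 using pos by (simp add: field_simps power2_eq_square)
  moreover have "a^2 * (b - s) < 0"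
    using a unfolding s_def by (intro mult_pos_neg) auto
  ultimately have "a * t + b * t^2 < 0" using pos by (simp add: divide_neg_pos)
  with assms[of t] show False by simp
qed

lemma vinner_sym: "vinner V x y = vinner V y x"
  unfolding vinner_def by (simp add: mult.commute)

lemma vinner_expand:
  "vinner V (\<lambda>u. a u + t * b u) (\<lambda>u. a u + t * b u)
     = vinner V a a + 2 * t * vinner V a b + t^2 * vinner V b b"
proof -
  have "(\<Sum>u\<in>V. (a u + t * b u) * (a u + t * b u)) = (\<Sum>u\<in>V. a u * a u + 2 * t * (a u * b u) + t^2 * (b u * b u))"
    by (rule sum.cong) (auto simp: algebra_simps power2_eq_square)
  also have "\<dots> = (\<Sum>u\<in>V. a u * a u) + 2 * t * (\<Sum>u\<in>V. a u * b u) + t^2 * (\<Sum>u\<in>V. b u * b u)"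
    by (simp add: sum.distrib sum_distrib_left)
  finally show ?thesis unfolding vinner_def .
qed

lemma vinner_nonneg: "0 \<le> vinner V x x"
  unfolding vinner_def by (simp add: sum_nonneg)

lemma vinner_zero_iff:
  assumes "finite V"
  shows "vinner V x x = 0 \<longleftrightarrow> (\<forall>u\<in>V. x u = 0)"
  unfolding vinner_def using assms by (simp add: sum_nonneg_eq_0_iff)

lemma coord_le_vinner:
  assumes "finite V" "u \<in> V"
  shows "(x u)^2 \<le> vinner V x x"
  unfolding vinner_def power2_eq_square
  using assms by (intro member_le_sum) auto

lemma vinner_cont[continuous_intros]:
  "continuous_on S (\<lambda>y::'a\<Rightarrow>real. vinner V (f y) (g y))"
  if "\<And>u. continuous_on S (\<lambda>y. f y u)" "\<And>u. continuous_on S (\<lambda>y. g y u)"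
  unfolding vinner_def by (intro continuous_intros that)

lemma abs_le_sq: "\<bar>z::real\<bar> \<le> z^2 + 1"
proof -
  have "0 \<le> (\<bar>z\<bar> - 1)^2" by simp
  then show ?thesis by (simp add: power2_eq_square algebra_simps)
qed

definition subsp :: "'a set \<Rightarrow> ('a \<Rightarrow> real) set \<Rightarrow> bool" where
  "subsp V W \<longleftrightarrow> W \<subseteq> vecs V \<and> (\<lambda>_. 0) \<in> W \<and>
     (\<forall>w1\<in>W. \<forall>w2\<in>W. \<forall>t. (\<lambda>u. w1 u + t * w2 u) \<in> W)"

lemma proj_exists:
  assumes fin: "finite V" and cl: "closed W" and W: "subsp V W"
  shows "\<exists>y\<in>W. \<forall>w\<in>W. vinner V (\<lambda>u. x u - y u) w = 0"
proof -
  have Wv: "W \<subseteq> vecs V" and W0: "(\<lambda>_. 0) \<in> W"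
    and Wc: "\<And>w1 w2 t. w1 \<in> W \<Longrightarrow> w2 \<in> W \<Longrightarrow> (\<lambda>u. w1 u + t * w2 u) \<in> W"
    using W unfolding subsp_def by auto
  define \<psi> where "\<psi> = (\<lambda>w. vinner V (\<lambda>u. x u - w u) (\<lambda>u. x u - w u))"
  define R where "R = 4 * vinner V x x"
  define K where "K = W \<inter> {w. vinner V w w \<le> R}"
  have "closed {w::'a\<Rightarrow>real. vinner V w w \<le> R}"
    by (intro closed_Collect_le continuous_intros)
  then have clK: "closed K" unfolding K_def using cl by auto
  have "compact K"
  proof (rule closed_bounded_compact[OF clK, of V "R + 1"])
    fix y u assume "y \<in> K" "u \<notin> V"
    then show "y u = 0" using Wv unfolding K_def vecs_def by auto
  next
    fix y u assume y: "y \<in> K"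
    show "\<bar>y u\<bar> \<le> R + 1"
    proof (cases "u \<in> V")
      case True
      then have "(y u)^2 \<le> R" using coord_le_vinner[OF fin True, of y] y unfolding K_def by auto
      then show ?thesis using abs_le_sq[of "y u"] by linarith
    next
      case False
      then have "y u = 0" using y Wv unfolding K_def vecs_def by auto
      moreover have "0 \<le> R" unfolding R_def using vinner_nonneg[of V x] by simp
      ultimately show ?thesis by simp
    qed
  qed
  moreover have "(\<lambda>_. 0) \<in> K" unfolding K_def R_def using W0 vinner_nonneg[of V x] by (simp add: vinner_def)
  moreover have "continuous_on K \<psi>" unfolding \<psi>_def by (intro continuous_intros)
  ultimately obtain w0 where w0K: "w0 \<in> K" and w0min: "\<And>w. w \<in> K \<Longrightarrow> \<psi> w0 \<le> \<psi> w"
    using continuous_attains_inf[of K \<psi>] by blast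
  have w0W: "w0 \<in> W" using w0K unfolding K_def by simp
  have glob: "\<psi> w0 \<le> \<psi> w" if w: "w \<in> W" for w
  proof (cases "vinner V w w \<le> R")
    case True then show ?thesis using w w0min unfolding K_def by simp
  next
    case False
    have "0 \<le> vinner V (\<lambda>u. 2 * x u - w u) (\<lambda>u. 2 * x u - w u)" by (rule vinner_nonneg)
    moreover have "\<psi> w - (vinner V w w / 2 - vinner V x x) = vinner V (\<lambda>u. 2 * x u - w u) (\<lambda>u. 2 * x u - w u) / 2"
    proof -
      have "\<psi> w - (vinner V w w / 2 - vinner V x x) =
          (\<Sum>u\<in>V. (x u - w u) * (x u - w u) - (w u * w u / 2 - x u * x u))"
        unfolding \<psi>_def vinner_def by (simp add: sum_subtractf sum_divide_distrib)
      also have "\<dots> = (\<Sum>u\<in>V. (2 * x u - w u) * (2 * x u - w u) / 2)"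
        by (rule sum.cong) (auto simp: algebra_simps)
      finally show ?thesis unfolding vinner_def by (simp add: sum_divide_distrib)
    qed
    ultimately have "vinner V w w / 2 - vinner V x x \<le> \<psi> w" by linarith
    moreover have "\<psi> (\<lambda>_. 0) = vinner V x x" unfolding \<psi>_def by simp
    moreover have "\<psi> w0 \<le> \<psi> (\<lambda>_. 0)" using w0min \<open>(\<lambda>_. 0) \<in> K\<close> by blast
    ultimately show ?thesis using False unfolding R_def by linarith
  qed
  have "vinner V (\<lambda>u. x u - w0 u) h = 0" if h: "h \<in> W" for h
  proof -
    let ?a = "(\<lambda>u. x u - w0 u)"
    have "0 \<le> (2 * vinner V ?a h) * t + vinner V h h * t^2" for t
    proof -
      have "(\<lambda>u. w0 u + (-t) * h u) \<in> W" using Wc[OF w0W h] .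
      then have "\<psi> w0 \<le> \<psi> (\<lambda>u. w0 u + (-t) * h u)" by (rule glob)
      moreover have "\<psi> (\<lambda>u. w0 u + (-t) * h u) = vinner V (\<lambda>u. ?a u + t * h u) (\<lambda>u. ?a u + t * h u)"
        unfolding \<psi>_def by (simp add: algebra_simps)
      ultimately show ?thesis unfolding vinner_expand \<psi>_def by (simp add: algebra_simps)
    qed
    then have "2 * vinner V ?a h = 0" by (rule quad_nonneg_zero)
    then show ?thesis by simp
  qed
  then show ?thesis using w0W by blast
qed


lemma proj_unique:
  assumes fin: "finite V" and W: "subsp V W" and y1: "y1 \<in> W" and y2: "y2 \<in> W"
    and o1: "\<forall>w\<in>W. vinner V (\<lambda>u. x u - y1 u) w = 0"
    and o2: "\<forall>w\<in>W. vinner V (\<lambda>u. x u - y2 u) w = 0"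
  shows "y1 = y2"
proof -
  define d where "d = (\<lambda>u. y1 u + (-1) * y2 u)"
  have dW: "d \<in> W" using W y1 y2 unfolding subsp_def d_def by blast
  have "vinner V d d = vinner V (\<lambda>u. x u - y2 u) d - vinner V (\<lambda>u. x u - y1 u) d"
    unfolding vinner_def d_def by (simp add: sum_subtractf[symmetric] algebra_simps)
  then have "vinner V d d = 0" using o1 o2 dW by simp
  then have "\<forall>u\<in>V. d u = 0" using vinner_zero_iff[OF fin] by blast
  moreover have "y1 u = 0 \<and> y2 u = 0" if "u \<notin> V" for u
    using y1 y2 W that unfolding subsp_def vecs_def by blast
  ultimately show ?thesis unfolding d_def by (intro ext) (metis add.right_neutral mult_minus1 add_uminus_conv_diff eq_iff_diff_eq_0)
qed

lemma cont_if_const[continuous_intros]: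
  "continuous_on S f \<Longrightarrow> continuous_on S g \<Longrightarrow> continuous_on S (\<lambda>x. if P then f x else g x)"
  by (cases P) auto

lemma lap_cont[continuous_intros]: "continuous_on S (\<lambda>x. laplacian V E x u)"
  unfolding laplacian_def by (intro continuous_intros)

lemma lap_lin:
  "laplacian V E (\<lambda>u. a * x u + b * y u) = (\<lambda>u. a * laplacian V E x u + b * laplacian V E y u)"
  unfolding laplacian_def
  by (rule ext) (simp add: sum.distrib sum_distrib_left algebra_simps)

lemma lap_vecs: "laplacian V E x \<in> vecs V"
  unfolding laplacian_def vecs_def by simp

lemma lap_sym:
  assumes "simple_graph V E"
  shows "vinner V x (laplacian V E y) = vinner V (laplacian V E x) y"
proof -
  have fin: "finite V" and sym: "\<And>u w. E u w \<Longrightarrow> E w u" using assms unfolding simple_graph_def by auto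
  have "(\<Sum>u\<in>V. x u * (\<Sum>w\<in>{w \<in> V. E u w}. y w)) = (\<Sum>u\<in>V. \<Sum>w\<in>V. if E u w then x u * y w else 0)"
    by (simp add: sum_distrib_left sum.inter_filter[OF fin, symmetric] if_distrib cong: if_cong)
  also have "\<dots> = (\<Sum>w\<in>V. \<Sum>u\<in>V. if E u w then x u * y w else 0)" by (rule sum.swap)
  also have "\<dots> = (\<Sum>w\<in>V. \<Sum>u\<in>V. if E w u then y w * x u else 0)"
    using sym by (intro sum.cong refl) (auto simp: mult.commute)
  also have "\<dots> = (\<Sum>u\<in>V. y u * (\<Sum>w\<in>{w \<in> V. E u w}. x w))"
    by (simp add: sum_distrib_left sum.inter_filter[OF fin, symmetric] if_distrib cong: if_cong)
  finally have key: "(\<Sum>u\<in>V. x u * (\<Sum>w\<in>{w \<in> V. E u w}. y w)) = (\<Sum>u\<in>V. y u * (\<Sum>w\<in>{w \<in> V. E u w}. x w))" .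
  show ?thesis
    unfolding vinner_def laplacian_def
    using key by (simp add: right_diff_distrib left_diff_distrib sum_subtractf algebra_simps)
qed

lemma eigsp_subsp: "subsp V (lap_eigenspace V E \<theta>)"
  unfolding subsp_def lap_eigenspace_def
proof (intro conjI ballI allI)
  show "{x \<in> vecs V. laplacian V E x = (\<lambda>u. \<theta> * x u)} \<subseteq> vecs V" by auto
  show "(\<lambda>_. 0) \<in> {x \<in> vecs V. laplacian V E x = (\<lambda>u. \<theta> * x u)}"
    using lap_lin[of V E 0 _ 0 _] by (auto simp: vecs_def laplacian_def)
next
  fix w1 w2 t assume w1: "w1 \<in> {x \<in> vecs V. laplacian V E x = (\<lambda>u. \<theta> * x u)}"
    and w2: "w2 \<in> {x \<in> vecs V. laplacian V E x = (\<lambda>u. \<theta> * x u)}"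
  have "laplacian V E (\<lambda>u. 1 * w1 u + t * w2 u) = (\<lambda>u. 1 * laplacian V E w1 u + t * laplacian V E w2 u)"
    by (rule lap_lin)
  then show "(\<lambda>u. w1 u + t * w2 u) \<in> {x \<in> vecs V. laplacian V E x = (\<lambda>u. \<theta> * x u)}"
    using w1 w2 by (auto simp: vecs_def algebra_simps)
qed

lemma eigsp_closed: "closed (lap_eigenspace V E \<theta>)"
proof -
  have "lap_eigenspace V E \<theta> = {x. \<forall>u. (if u \<in> V then 0 else x u) = 0 \<and> laplacian V E x u = \<theta> * x u}"
    unfolding lap_eigenspace_def vecs_def by (auto simp: fun_eq_iff)
  also have "closed \<dots>"
    by (intro closed_Collect_all closed_Collect_conj closed_Collect_eq continuous_intros)
  finally show ?thesis .
qed

lemma eig_proj_prop: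
  assumes fin: "finite V"
  shows "eig_proj V E \<theta> x \<in> lap_eigenspace V E \<theta> \<and>
    (\<forall>w \<in> lap_eigenspace V E \<theta>. vinner V (\<lambda>u. x u - eig_proj V E \<theta> x u) w = 0)"
proof -
  have ex: "\<exists>y\<in>lap_eigenspace V E \<theta>. \<forall>w\<in>lap_eigenspace V E \<theta>. vinner V (\<lambda>u. x u - y u) w = 0"
    by (rule proj_exists[OF fin eigsp_closed eigsp_subsp])
  let ?P = "\<lambda>y. y \<in> lap_eigenspace V E \<theta> \<and> (\<forall>w\<in>lap_eigenspace V E \<theta>. vinner V (\<lambda>u. x u - y u) w = 0)"
  have "\<exists>!y. ?P y" using ex proj_unique[OF fin eigsp_subsp] by blast
  then have "?P (THE y. ?P y)" by (rule theI')
  then show ?thesis unfolding eig_proj_def .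
qed

lemma eig_proj_eqI:
  assumes fin: "finite V" and y: "y \<in> lap_eigenspace V E \<theta>"
    and o: "\<forall>w \<in> lap_eigenspace V E \<theta>. vinner V (\<lambda>u. x u - y u) w = 0"
  shows "eig_proj V E \<theta> x = y"
  using proj_unique[OF fin eigsp_subsp _ y _ o] eig_proj_prop[OF fin] by blast


lemma vinner_bilin:
  "vinner V (\<lambda>u. a u + t * b u) (\<lambda>u. c u + t * d u)
     = vinner V a c + t * (vinner V a d + vinner V b c) + t^2 * vinner V b d"
proof -
  have "(\<Sum>u\<in>V. (a u + t * b u) * (c u + t * d u)) = (\<Sum>u\<in>V. a u * c u + t * (a u * d u) + t * (b u * c u) + t^2 * (b u * d u))"
    by (rule sum.cong) (auto simp: algebra_simps power2_eq_square)
  also have "\<dots> = (\<Sum>u\<in>V. a u * c u) + t * (\<Sum>u\<in>V. a u * d u) + t * (\<Sum>u\<in>V. b u * c u) + t^2 * (\<Sum>u\<in>V. b u * d u)"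
    by (simp add: sum.distrib sum_distrib_left)
  finally show ?thesis unfolding vinner_def by (simp add: algebra_simps)
qed

lemma vinner_scale_left: "vinner V (\<lambda>u. t * x u) y = t * vinner V x y"
  unfolding vinner_def by (simp add: sum_distrib_left algebra_simps)

lemma vinner_scale_right: "vinner V x (\<lambda>u. t * y u) = t * vinner V x y"
  unfolding vinner_def by (simp add: sum_distrib_left algebra_simps)

lemma vinner_diff_left: "vinner V (\<lambda>u. x u - y u) z = vinner V x z - vinner V y z"
  unfolding vinner_def by (simp add: sum_subtractf algebra_simps)

lemma vinner_diff_right: "vinner V z (\<lambda>u. x u - y u) = vinner V z x - vinner V z y"
  unfolding vinner_def by (simp add: sum_subtractf algebra_simps)

lemma vinner_add_left: "vinner V (\<lambda>u. x u + y u) z = vinner V x z + vinner V y z"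
  unfolding vinner_def by (simp add: sum.distrib algebra_simps)

lemma vinner_add_right: "vinner V z (\<lambda>u. x u + y u) = vinner V z x + vinner V z y"
  unfolding vinner_def by (simp add: sum.distrib algebra_simps)

lemma vinner_zero_left[simp]: "vinner V (\<lambda>_. 0) y = 0"
  unfolding vinner_def by simp

lemma vinner_zero_right[simp]: "vinner V y (\<lambda>_. 0) = 0"
  unfolding vinner_def by simp

lemma vinner_sum_right:
  "vinner V z (\<lambda>u. \<Sum>i\<in>T. c i * f i u) = (\<Sum>i\<in>T. c i * vinner V z (f i))"
proof -
  have "(\<Sum>u\<in>V. z u * (\<Sum>i\<in>T. c i * f i u)) = (\<Sum>u\<in>V. \<Sum>i\<in>T. c i * (z u * f i u))"
    by (rule sum.cong) (simp_all add: sum_distrib_left mult.left_commute)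
  also have "\<dots> = (\<Sum>i\<in>T. \<Sum>u\<in>V. c i * (z u * f i u))" by (rule sum.swap)
  also have "\<dots> = (\<Sum>i\<in>T. c i * (\<Sum>u\<in>V. z u * f i u))" by (simp add: sum_distrib_left)
  finally show ?thesis unfolding vinner_def .
qed

lemma vinner_sum_left:
  "vinner V (\<lambda>u. \<Sum>i\<in>T. c i * f i u) z = (\<Sum>i\<in>T. c i * vinner V (f i) z)"
proof -
  have "vinner V (\<lambda>u. \<Sum>i\<in>T. c i * f i u) z = vinner V z (\<lambda>u. \<Sum>i\<in>T. c i * f i u)" by (rule vinner_sym)
  also have "\<dots> = (\<Sum>i\<in>T. c i * vinner V z (f i))" by (rule vinner_sum_right)
  also have "\<dots> = (\<Sum>i\<in>T. c i * vinner V (f i) z)" by (simp add: vinner_sym[of V z])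
  finally show ?thesis .
qed

lemma lap_scale: "laplacian V E (\<lambda>u. a * x u) = (\<lambda>u. a * laplacian V E x u)"
  unfolding laplacian_def by (rule ext) (simp add: sum_distrib_left algebra_simps)

lemma eigsp_scale: "x \<in> lap_eigenspace V E \<theta> \<Longrightarrow> (\<lambda>u. t * x u) \<in> lap_eigenspace V E \<theta>"
  unfolding lap_eigenspace_def vecs_def by (simp add: lap_scale) (simp add: algebra_simps)

lemma eigsp_comb: "x \<in> lap_eigenspace V E \<theta> \<Longrightarrow> y \<in> lap_eigenspace V E \<theta> \<Longrightarrow> (\<lambda>u. x u + t * y u) \<in> lap_eigenspace V E \<theta>"
  using eigsp_subsp[of V E \<theta>] unfolding subsp_def by blast

lemma eigsp_vecs: "x \<in> lap_eigenspace V E \<theta> \<Longrightarrow> x \<in> vecs V"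
  unfolding lap_eigenspace_def by auto

lemma eigsp_eq: "x \<in> lap_eigenspace V E \<theta> \<Longrightarrow> laplacian V E x = (\<lambda>u. \<theta> * x u)"
  unfolding lap_eigenspace_def by auto

lemma eig_orth:
  assumes sg: "simple_graph V E" and x: "x \<in> lap_eigenspace V E \<theta>" and y: "y \<in> lap_eigenspace V E \<mu>"
    and ne: "\<theta> \<noteq> \<mu>"
  shows "vinner V x y = 0"
proof -
  have "\<theta> * vinner V x y = vinner V (laplacian V E x) y"
    using eigsp_eq[OF x] by (simp add: vinner_scale_left)
  also have "\<dots> = vinner V x (laplacian V E y)" using lap_sym[OF sg] by simp
  also have "\<dots> = \<mu> * vinner V x y" using eigsp_eq[OF y] by (simp add: vinner_scale_right)
  finally show ?thesis using ne by simp
qed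

lemma vecs_nonzero:
  assumes fin: "finite V" and x: "x \<in> vecs V" and nz: "x \<noteq> (\<lambda>_. 0)"
  shows "vinner V x x > 0"
proof -
  have "\<exists>u\<in>V. x u \<noteq> 0"
  proof (rule ccontr)
    assume "\<not> (\<exists>u\<in>V. x u \<noteq> 0)"
    then have "x = (\<lambda>_. 0)" using x unfolding vecs_def by (intro ext) blast
    then show False using nz by simp
  qed
  then have "vinner V x x \<noteq> 0" using vinner_zero_iff[OF fin] by blast
  then show ?thesis using vinner_nonneg[of V x] by linarith
qed

lemma vecs_eq:
  assumes "x \<in> vecs V" "y \<in> vecs V" "\<forall>u\<in>V. x u = y u"
  shows "x = y"
proof
  fix u show "x u = y u" using assms unfolding vecs_def by (cases "u \<in> V") auto
qed

lemma bessel: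
  assumes fin: "finite T"
    and on: "\<And>i j. i \<in> T \<Longrightarrow> j \<in> T \<Longrightarrow> vinner V (f i) (f j) = (if i = j then 1 else 0)"
  shows "(\<Sum>i\<in>T. (vinner V z (f i))^2) \<le> vinner V z z"
proof -
  define c where "c i = vinner V z (f i)" for i
  define S where "S = (\<lambda>u. \<Sum>i\<in>T. c i * f i u)"
  have zS: "vinner V z S = (\<Sum>i\<in>T. (c i)^2)"
    unfolding S_def vinner_sum_right c_def by (simp add: power2_eq_square)
  have Sf: "vinner V S (f j) = c j" if "j \<in> T" for j
  proof -
    have "vinner V S (f j) = (\<Sum>i\<in>T. c i * (if i = j then 1 else 0))"
      unfolding S_def vinner_sum_left using on that by (intro sum.cong) auto
    also have "\<dots> = c j" using fin that by (simp add: if_distrib sum.delta cong: if_cong)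
    finally show ?thesis .
  qed
  have SS: "vinner V S S = (\<Sum>i\<in>T. (c i)^2)"
  proof -
    have "vinner V S S = (\<Sum>i\<in>T. c i * vinner V S (f i))"
      using vinner_sum_right[where V=V and z=S and T=T and c=c and f=f] unfolding S_def[symmetric] .
    also have "\<dots> = (\<Sum>i\<in>T. (c i)^2)" using Sf by (intro sum.cong) (auto simp: power2_eq_square)
    finally show ?thesis .
  qed
  have "0 \<le> vinner V (\<lambda>u. z u + (-1) * S u) (\<lambda>u. z u + (-1) * S u)" by (rule vinner_nonneg)
  also have "\<dots> = vinner V z z - (\<Sum>i\<in>T. (c i)^2)"
    unfolding vinner_expand zS SS by simp
  finally show ?thesis unfolding c_def by simp
qed


lemma unit_eigvec:
  assumes fin: "finite V" and ev: "lap_eigenvalue V E \<theta>"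
  shows "\<exists>x. x \<in> lap_eigenspace V E \<theta> \<and> vinner V x x = 1"
proof -
  obtain x where x: "x \<in> lap_eigenspace V E \<theta>" "x \<noteq> (\<lambda>_. 0)"
    using ev unfolding lap_eigenvalue_def by blast
  have pos: "vinner V x x > 0" using vecs_nonzero[OF fin eigsp_vecs[OF x(1)] x(2)] .
  define s where "s = sqrt (vinner V x x)"
  have spos: "s > 0" unfolding s_def using pos by simp
  have ss: "s * s = vinner V x x" unfolding s_def using pos by simp
  have "(\<lambda>u. (1/s) * x u) \<in> lap_eigenspace V E \<theta>" by (rule eigsp_scale[OF x(1)])
  moreover have "vinner V (\<lambda>u. (1/s) * x u) (\<lambda>u. (1/s) * x u) = 1"
    unfolding vinner_scale_left vinner_scale_right using spos ss pos by (simp add: field_simps)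
  ultimately show ?thesis by blast
qed

lemma vinner_char_left:
  assumes "finite V" "u \<in> V"
  shows "vinner V (char_vec u) g = g u"
proof -
  have "vinner V (char_vec u) g = (\<Sum>v\<in>V. if v = u then g v else 0)"
    unfolding vinner_def char_vec_def by (intro sum.cong) auto
  also have "\<dots> = g u" using assms by (simp add: sum.delta')
  finally show ?thesis .
qed

lemma eig_finite:
  assumes sg: "simple_graph V E"
  shows "finite {\<theta>. lap_eigenvalue V E \<theta>}"
proof (rule ccontr)
  have fin: "finite V" using sg unfolding simple_graph_def by auto
  let ?\<Theta> = "{\<theta>. lap_eigenvalue V E \<theta>}"
  assume inf: "infinite ?\<Theta>"
  define nv where "nv \<theta> = (SOME x. x \<in> lap_eigenspace V E \<theta> \<and> vinner V x x = 1)" for \<theta>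
  have nv: "nv \<theta> \<in> lap_eigenspace V E \<theta> \<and> vinner V (nv \<theta>) (nv \<theta>) = 1" if "\<theta> \<in> ?\<Theta>" for \<theta>
  proof -
    have "\<exists>x. x \<in> lap_eigenspace V E \<theta> \<and> vinner V x x = 1" using unit_eigvec[OF fin, of E \<theta>] that by simp
    then show ?thesis unfolding nv_def by (rule someI_ex)
  qed
  obtain T where T: "T \<subseteq> ?\<Theta>" "finite T" "card T = card V + 1"
    using infinite_arbitrarily_large[OF inf] by blast
  have on: "vinner V (nv i) (nv j) = (if i = j then 1 else 0)" if "i \<in> T" "j \<in> T" for i j
    using nv T(1) that eig_orth[OF sg] by (cases "i = j") (auto, blast)
  have b: "(\<Sum>\<theta>\<in>T. (nv \<theta> u)^2) \<le> 1" if u: "u \<in> V" for u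
  proof -
    have "(\<Sum>\<theta>\<in>T. (vinner V (char_vec u) (nv \<theta>))^2) \<le> vinner V (char_vec u) (char_vec u)"
      by (rule bessel[OF T(2) on])
    then show ?thesis using vinner_char_left[OF fin u] by (simp add: char_vec_def)
  qed
  have "real (card T) = (\<Sum>\<theta>\<in>T. vinner V (nv \<theta>) (nv \<theta>))"
    using nv T(1) by (simp add: subset_eq)
  also have "\<dots> = (\<Sum>\<theta>\<in>T. \<Sum>u\<in>V. (nv \<theta> u)^2)" unfolding vinner_def by (simp add: power2_eq_square)
  also have "\<dots> = (\<Sum>u\<in>V. \<Sum>\<theta>\<in>T. (nv \<theta> u)^2)" by (rule sum.swap)
  also have "\<dots> \<le> (\<Sum>u\<in>V. 1)" using b by (intro sum_mono) auto
  also have "\<dots> = real (card V)" by simp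
  finally show False using T(3) by simp
qed


lemma no_orth_vec:
  assumes sg: "simple_graph V E" and y: "y \<in> vecs V"
    and orth: "\<forall>\<theta>. \<forall>e\<in>lap_eigenspace V E \<theta>. vinner V y e = 0"
  shows "y = (\<lambda>_. 0)"
proof (rule ccontr)
  assume nz: "y \<noteq> (\<lambda>_. 0)"
  have fin: "finite V" using sg unfolding simple_graph_def by auto
  define Y where "Y = {y \<in> vecs V. \<forall>\<theta>. \<forall>e\<in>lap_eigenspace V E \<theta>. vinner V y e = 0}"
  have Ycomb: "(\<lambda>u. y1 u + t * y2 u) \<in> Y" if "y1 \<in> Y" "y2 \<in> Y" for y1 y2 t
    using that unfolding Y_def vecs_def by (auto simp: vinner_add_left vinner_scale_left)
  have Yscale: "(\<lambda>u. a * z u) \<in> Y" if "z \<in> Y" for z a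
    using that unfolding Y_def vecs_def by (auto simp: vinner_scale_left)
  have Ylap: "laplacian V E z \<in> Y" if z: "z \<in> Y" for z
  proof -
    have "vinner V (laplacian V E z) e = 0" if e: "e \<in> lap_eigenspace V E \<theta>" for e \<theta>
    proof -
      have "vinner V (laplacian V E z) e = vinner V z (laplacian V E e)" using lap_sym[OF sg] by simp
      also have "\<dots> = \<theta> * vinner V z e" using eigsp_eq[OF e] by (simp add: vinner_scale_right)
      also have "\<dots> = 0" using z e unfolding Y_def by simp
      finally show ?thesis .
    qed
    then show ?thesis unfolding Y_def using lap_vecs by blast
  qed
  have yY: "y \<in> Y" using y orth unfolding Y_def by simp
  define S where "S = Y \<inter> {z. vinner V z z = 1}"
  define g where "g = (\<lambda>z. vinner V z (laplacian V E z))"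
  have "closed Y"
  proof -
    have "Y = {z. \<forall>u. (if u \<in> V then 0 else z u) = 0} \<inter> {z. \<forall>\<theta>. \<forall>e. e \<in> lap_eigenspace V E \<theta> \<longrightarrow> vinner V z e = 0}"
      unfolding Y_def vecs_def by auto
    also have "closed \<dots>"
      by (intro closed_Int closed_Collect_all closed_Collect_imp closed_Collect_eq continuous_intros open_Collect_const)
    finally show ?thesis .
  qed
  moreover have "closed {z::'a\<Rightarrow>real. vinner V z z = 1}"
    by (intro closed_Collect_eq continuous_intros)
  ultimately have clS: "closed S" unfolding S_def by auto
  have cS: "compact S"
  proof (rule closed_bounded_compact[OF clS, of V 2])
    fix z u assume "z \<in> S" "u \<notin> V"
    then show "z u = 0" unfolding S_def Y_def vecs_def by auto
  next
    fix z u assume z: "z \<in> S"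
    show "\<bar>z u\<bar> \<le> 2"
    proof (cases "u \<in> V")
      case True
      then have "(z u)^2 \<le> 1" using coord_le_vinner[OF fin True, of z] z unfolding S_def by auto
      then show ?thesis using abs_le_sq[of "z u"] by linarith
    next
      case False
      then show ?thesis using z unfolding S_def Y_def vecs_def by auto
    qed
  qed
  have ypos: "vinner V y y > 0" by (rule vecs_nonzero[OF fin y nz])
  define s where "s = sqrt (vinner V y y)"
  have spos: "s > 0" unfolding s_def using ypos by simp
  have ss: "s * s = vinner V y y" unfolding s_def using ypos by simp
  have "(\<lambda>u. (1/s) * y u) \<in> Y" by (rule Yscale[OF yY])
  moreover have "vinner V (\<lambda>u. (1/s) * y u) (\<lambda>u. (1/s) * y u) = 1"
    unfolding vinner_scale_left vinner_scale_right using spos ss ypos by (simp add: field_simps)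
  ultimately have "(\<lambda>u. (1/s) * y u) \<in> S" unfolding S_def by blast
  then have Sne: "S \<noteq> {}" by blast
  have "continuous_on S g" unfolding g_def by (intro continuous_intros)
  then obtain y0 where y0S: "y0 \<in> S" and y0max: "\<And>z. z \<in> S \<Longrightarrow> g z \<le> g y0"
    using continuous_attains_sup[OF cS Sne] by blast
  define M where "M = g y0"
  have y0Y: "y0 \<in> Y" and y0n: "vinner V y0 y0 = 1" using y0S unfolding S_def by auto
  have gscale: "g (\<lambda>u. a * z u) = a^2 * g z" for a z
    unfolding g_def lap_scale vinner_scale_left vinner_scale_right by (simp add: power2_eq_square)
  have bound: "g z \<le> M * vinner V z z" if z: "z \<in> Y" for z
  proof (cases "vinner V z z = 0")
    case True
    then have "\<forall>u\<in>V. z u = 0" using vinner_zero_iff[OF fin] by blast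
    then have "g z = 0" unfolding g_def vinner_def by simp
    then show ?thesis using True by simp
  next
    case False
    then have zpos: "vinner V z z > 0" using vinner_nonneg[of V z] by linarith
    define r where "r = sqrt (vinner V z z)"
    have rpos: "r > 0" unfolding r_def using zpos by simp
    have rr: "r * r = vinner V z z" unfolding r_def using zpos by simp
    have "(\<lambda>u. (1/r) * z u) \<in> Y" by (rule Yscale[OF z])
    moreover have "vinner V (\<lambda>u. (1/r) * z u) (\<lambda>u. (1/r) * z u) = 1"
      unfolding vinner_scale_left vinner_scale_right using rpos rr zpos by (simp add: field_simps)
    ultimately have "(\<lambda>u. (1/r) * z u) \<in> S" unfolding S_def by blast
    then have "g (\<lambda>u. (1/r) * z u) \<le> M" unfolding M_def by (rule y0max)
    then have "(1/r)^2 * g z \<le> M" unfolding gscale .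
    then have "g z \<le> M * (r * r)" using rpos by (simp add: field_simps power2_eq_square)
    then show ?thesis using rr by simp
  qed
  define h0 where "h0 = (\<lambda>u. laplacian V E y0 u + (-M) * y0 u)"
  have var: "vinner V h0 h = 0" if h: "h \<in> Y" for h
  proof -
    have "0 \<le> (2 * (M * vinner V y0 h - vinner V (laplacian V E y0) h)) * t + (M * vinner V h h - g h) * t^2" for t
    proof -
      have "(\<lambda>u. y0 u + t * h u) \<in> Y" by (rule Ycomb[OF y0Y h])
      then have "g (\<lambda>u. y0 u + t * h u) \<le> M * vinner V (\<lambda>u. y0 u + t * h u) (\<lambda>u. y0 u + t * h u)"
        by (rule bound)
      moreover have "g (\<lambda>u. y0 u + t * h u) = g y0 + 2 * t * vinner V (laplacian V E y0) h + t^2 * g h"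
      proof -
        have "laplacian V E (\<lambda>u. 1 * y0 u + t * h u) = (\<lambda>u. 1 * laplacian V E y0 u + t * laplacian V E h u)"
          by (rule lap_lin)
        then have "g (\<lambda>u. y0 u + t * h u) = vinner V (\<lambda>u. y0 u + t * h u) (\<lambda>u. laplacian V E y0 u + t * laplacian V E h u)"
          unfolding g_def by simp
        also have "\<dots> = g y0 + t * (vinner V y0 (laplacian V E h) + vinner V h (laplacian V E y0)) + t^2 * g h"
          unfolding vinner_bilin g_def ..
        also have "vinner V y0 (laplacian V E h) = vinner V (laplacian V E y0) h" using lap_sym[OF sg] by simp
        finally show ?thesis by (simp add: vinner_sym[of V h])
      qed
      ultimately show ?thesis unfolding vinner_expand M_def using y0n
        by (simp add: algebra_simps)
    qed
    then have "2 * (M * vinner V y0 h - vinner V (laplacian V E y0) h) = 0" by (rule quad_nonneg_zero)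
    then show ?thesis unfolding h0_def vinner_add_left vinner_scale_left by simp
  qed
  have h0Y: "h0 \<in> Y" unfolding h0_def by (rule Ycomb[OF Ylap[OF y0Y] y0Y])
  have "vinner V h0 h0 = 0" by (rule var[OF h0Y])
  then have "\<forall>u\<in>V. h0 u = 0" using vinner_zero_iff[OF fin] by blast
  then have "laplacian V E y0 = (\<lambda>u. M * y0 u)"
    using y0Y lap_vecs[of V E y0] unfolding h0_def Y_def
    by (intro vecs_eq) (auto simp: vecs_def)
  then have "y0 \<in> lap_eigenspace V E M" using y0Y unfolding lap_eigenspace_def Y_def by simp
  then have "vinner V y0 y0 = 0" using y0Y unfolding Y_def by blast
  then show False using y0n by simp
qed


lemma eig_proj_noneig:
  assumes fin: "finite V" and ne: "\<not> lap_eigenvalue V E \<theta>"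
  shows "eig_proj V E \<theta> x = (\<lambda>_. 0)"
  using eig_proj_prop[OF fin, of E \<theta> x] ne unfolding lap_eigenvalue_def by blast

lemma eig_proj_lin:
  assumes fin: "finite V"
  shows "eig_proj V E \<theta> (\<lambda>u. x u + t * y u) = (\<lambda>u. eig_proj V E \<theta> x u + t * eig_proj V E \<theta> y u)"
proof (rule eig_proj_eqI[OF fin])
  have px: "eig_proj V E \<theta> x \<in> lap_eigenspace V E \<theta>" and py: "eig_proj V E \<theta> y \<in> lap_eigenspace V E \<theta>"
    using eig_proj_prop[OF fin] by blast+
  then show "(\<lambda>u. eig_proj V E \<theta> x u + t * eig_proj V E \<theta> y u) \<in> lap_eigenspace V E \<theta>"
    by (rule eigsp_comb)
  show "\<forall>w\<in>lap_eigenspace V E \<theta>. vinner V (\<lambda>u. x u + t * y u - (eig_proj V E \<theta> x u + t * eig_proj V E \<theta> y u)) w = 0"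
  proof
    fix w assume w: "w \<in> lap_eigenspace V E \<theta>"
    have "(\<lambda>u. x u + t * y u - (eig_proj V E \<theta> x u + t * eig_proj V E \<theta> y u))
        = (\<lambda>u. (x u - eig_proj V E \<theta> x u) + t * (y u - eig_proj V E \<theta> y u))"
      by (simp add: algebra_simps)
    then show "vinner V (\<lambda>u. x u + t * y u - (eig_proj V E \<theta> x u + t * eig_proj V E \<theta> y u)) w = 0"
      using eig_proj_prop[OF fin, of E \<theta>] w by (simp add: vinner_add_left vinner_scale_left)
  qed
qed

lemma eig_proj_scale:
  assumes fin: "finite V"
  shows "eig_proj V E \<theta> (\<lambda>u. t * y u) = (\<lambda>u. t * eig_proj V E \<theta> y u)"
proof (rule eig_proj_eqI[OF fin])
  show "(\<lambda>u. t * eig_proj V E \<theta> y u) \<in> lap_eigenspace V E \<theta>"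
    using eig_proj_prop[OF fin] eigsp_scale by blast
  show "\<forall>w\<in>lap_eigenspace V E \<theta>. vinner V (\<lambda>u. t * y u - t * eig_proj V E \<theta> y u) w = 0"
  proof
    fix w assume w: "w \<in> lap_eigenspace V E \<theta>"
    have "vinner V (\<lambda>u. t * y u - t * eig_proj V E \<theta> y u) w = t * vinner V (\<lambda>u. y u - eig_proj V E \<theta> y u) w"
      unfolding vinner_def by (simp add: sum_distrib_left algebra_simps)
    then show "vinner V (\<lambda>u. t * y u - t * eig_proj V E \<theta> y u) w = 0"
      using eig_proj_prop[OF fin, of E \<theta> y] w by simp
  qed
qed

lemma vinner_proj_proj:
  assumes fin: "finite V"
  shows "vinner V x (eig_proj V E \<theta> y) = vinner V (eig_proj V E \<theta> x) (eig_proj V E \<theta> y)"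
proof -
  have "vinner V (\<lambda>u. x u - eig_proj V E \<theta> x u) (eig_proj V E \<theta> y) = 0"
    using eig_proj_prop[OF fin, of E \<theta>] by blast
  then show ?thesis unfolding vinner_diff_left by simp
qed

lemma eig_complete:
  assumes sg: "simple_graph V E" and u: "u \<in> V"
  shows "(\<Sum>\<theta>\<in>{\<theta>. lap_eigenvalue V E \<theta>}. eig_proj V E \<theta> y u) = y u"
proof -
  have fin: "finite V" using sg unfolding simple_graph_def by auto
  let ?\<Theta> = "{\<theta>. lap_eigenvalue V E \<theta>}"
  have finT: "finite ?\<Theta>" by (rule eig_finite[OF sg])
  define r where "r = (\<lambda>u. if u \<in> V then y u - (\<Sum>\<theta>\<in>?\<Theta>. eig_proj V E \<theta> y u) else 0)"
  have rv: "r \<in> vecs V" unfolding r_def vecs_def by simp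
  have "vinner V r e = 0" if e: "e \<in> lap_eigenspace V E \<mu>" for e \<mu>
  proof (cases "lap_eigenvalue V E \<mu>")
    case False
    then have "e = (\<lambda>_. 0)" using e unfolding lap_eigenvalue_def by blast
    then show ?thesis by simp
  next
    case True
    have "vinner V r e = vinner V (\<lambda>u. y u - (\<Sum>\<theta>\<in>?\<Theta>. 1 * eig_proj V E \<theta> y u)) e"
      unfolding vinner_def r_def by simp
    also have "\<dots> = vinner V y e - (\<Sum>\<theta>\<in>?\<Theta>. 1 * vinner V (eig_proj V E \<theta> y) e)"
      unfolding vinner_diff_left vinner_sum_left ..
    also have "(\<Sum>\<theta>\<in>?\<Theta>. 1 * vinner V (eig_proj V E \<theta> y) e) = vinner V (eig_proj V E \<mu> y) e"
    proof -
      have "(\<Sum>\<theta>\<in>?\<Theta>. 1 * vinner V (eig_proj V E \<theta> y) e) = (\<Sum>\<theta>\<in>?\<Theta>. if \<theta> = \<mu> then vinner V (eig_proj V E \<theta> y) e else 0)"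
      proof (rule sum.cong[OF refl])
        fix \<theta> assume "\<theta> \<in> ?\<Theta>"
        show "1 * vinner V (eig_proj V E \<theta> y) e = (if \<theta> = \<mu> then vinner V (eig_proj V E \<theta> y) e else 0)"
          using eig_orth[OF sg _ e, of "eig_proj V E \<theta> y" \<theta>] eig_proj_prop[OF fin, of E \<theta> y] by auto
      qed
      also have "\<dots> = vinner V (eig_proj V E \<mu> y) e" using finT True by (simp add: sum.delta')
      finally show ?thesis .
    qed
    finally have "vinner V r e = vinner V (\<lambda>u. y u - eig_proj V E \<mu> y u) e" unfolding vinner_diff_left .
    then show ?thesis using eig_proj_prop[OF fin, of E \<mu> y] e by simp
  qed
  then have "r = (\<lambda>_. 0)" using no_orth_vec[OF sg rv] by blast
  then have "r u = 0" by simp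
  then show ?thesis using u unfolding r_def by simp
qed

lemma spec_inner:
  assumes sg: "simple_graph V E"
  shows "vinner V x y = (\<Sum>\<theta>\<in>{\<theta>. lap_eigenvalue V E \<theta>}. vinner V (eig_proj V E \<theta> x) (eig_proj V E \<theta> y))"
proof -
  have fin: "finite V" using sg unfolding simple_graph_def by auto
  let ?\<Theta> = "{\<theta>. lap_eigenvalue V E \<theta>}"
  have "vinner V x y = vinner V x (\<lambda>u. \<Sum>\<theta>\<in>?\<Theta>. 1 * eig_proj V E \<theta> y u)"
    unfolding vinner_def using eig_complete[OF sg] by (intro sum.cong) auto
  also have "\<dots> = (\<Sum>\<theta>\<in>?\<Theta>. 1 * vinner V x (eig_proj V E \<theta> y))" by (rule vinner_sum_right)
  also have "\<dots> = (\<Sum>\<theta>\<in>?\<Theta>. vinner V (eig_proj V E \<theta> x) (eig_proj V E \<theta> y))"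
    using vinner_proj_proj[OF fin] by simp
  finally show ?thesis .
qed

lemma eig_proj_lap:
  assumes sg: "simple_graph V E"
  shows "eig_proj V E \<theta> (laplacian V E y) = (\<lambda>u. \<theta> * eig_proj V E \<theta> y u)"
proof -
  have fin: "finite V" using sg unfolding simple_graph_def by auto
  show ?thesis
  proof (rule eig_proj_eqI[OF fin])
    show "(\<lambda>u. \<theta> * eig_proj V E \<theta> y u) \<in> lap_eigenspace V E \<theta>"
      using eig_proj_prop[OF fin] eigsp_scale by blast
    show "\<forall>w\<in>lap_eigenspace V E \<theta>. vinner V (\<lambda>u. laplacian V E y u - \<theta> * eig_proj V E \<theta> y u) w = 0"
    proof
      fix w assume w: "w \<in> lap_eigenspace V E \<theta>"
      have "vinner V (\<lambda>u. laplacian V E y u - \<theta> * eig_proj V E \<theta> y u) w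
          = vinner V y (laplacian V E w) - \<theta> * vinner V (eig_proj V E \<theta> y) w"
        unfolding vinner_diff_left vinner_scale_left using lap_sym[OF sg] by simp
      also have "\<dots> = \<theta> * vinner V (\<lambda>u. y u - eig_proj V E \<theta> y u) w"
        using eigsp_eq[OF w] by (simp add: vinner_scale_right vinner_diff_left algebra_simps)
      also have "\<dots> = 0" using eig_proj_prop[OF fin, of E \<theta> y] w by simp
      finally show "vinner V (\<lambda>u. laplacian V E y u - \<theta> * eig_proj V E \<theta> y u) w = 0" .
    qed
  qed
qed

lemma spec_lap:
  assumes sg: "simple_graph V E"
  shows "vinner V x (laplacian V E y) = (\<Sum>\<theta>\<in>{\<theta>. lap_eigenvalue V E \<theta>}. \<theta> * vinner V (eig_proj V E \<theta> x) (eig_proj V E \<theta> y))"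
  unfolding spec_inner[OF sg, of x "laplacian V E y"] eig_proj_lap[OF sg] vinner_scale_right ..

lemma spec_lap2:
  assumes sg: "simple_graph V E"
  shows "vinner V (laplacian V E x) (laplacian V E y) = (\<Sum>\<theta>\<in>{\<theta>. lap_eigenvalue V E \<theta>}. \<theta>^2 * vinner V (eig_proj V E \<theta> x) (eig_proj V E \<theta> y))"
  unfolding spec_inner[OF sg, of "laplacian V E x" "laplacian V E y"] eig_proj_lap[OF sg] vinner_scale_right vinner_scale_left
  by (simp add: power2_eq_square mult.assoc)

definition Rm :: "'v set \<Rightarrow> ('v \<Rightarrow> 'v \<Rightarrow> bool) \<Rightarrow> ('v set \<Rightarrow> real) \<Rightarrow> 'v \<Rightarrow> real" where
  "Rm V E q v = (if v \<in> V then (\<Sum>e\<in>{e \<in> edge_set E. v \<in> e}. q e) else 0)"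

definition Rt :: "('v \<Rightarrow> 'v \<Rightarrow> bool) \<Rightarrow> ('v \<Rightarrow> real) \<Rightarrow> 'v set \<Rightarrow> real" where
  "Rt E x e = (if e \<in> edge_set E then (\<Sum>u\<in>e. x u) else 0)"

context
  fixes V :: "'v set" and E :: "'v \<Rightarrow> 'v \<Rightarrow> bool" and r :: nat
  assumes reg: "regular_graph V E r"
begin

lemma sg: "simple_graph V E" using reg unfolding regular_graph_def by simp
lemma finV: "finite V" using sg unfolding simple_graph_def by simp
lemma Esym: "E u w \<Longrightarrow> E w u" using sg unfolding simple_graph_def by blast
lemma EV: "E u w \<Longrightarrow> u \<in> V \<and> w \<in> V \<and> u \<noteq> w" using sg unfolding simple_graph_def by blast
lemma deg: "v \<in> V \<Longrightarrow> card {w \<in> V. E v w} = r"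
  using reg unfolding regular_graph_def Defs.degree_def by simp

lemma edge_cases: "e \<in> edge_set E \<Longrightarrow> \<exists>u w. e = {u, w} \<and> E u w \<and> u \<noteq> w \<and> u \<in> V \<and> w \<in> V"
  unfolding edge_set_def using EV by blast

lemma edge_sub: "e \<in> edge_set E \<Longrightarrow> e \<subseteq> V"
  using edge_cases by blast

lemma edge_fin: "e \<in> edge_set E \<Longrightarrow> finite e"
  using edge_cases by blast

lemma edge_card: "e \<in> edge_set E \<Longrightarrow> card e = 2"
proof -
  assume "e \<in> edge_set E"
  then obtain u w where "e = {u, w}" "u \<noteq> w" using edge_cases by blast
  then show ?thesis by simp
qed

lemma finES: "finite (edge_set E)"
proof -
  have "edge_set E \<subseteq> Pow V" using edge_sub by blast
  moreover have "finite (Pow V)" using finV by simp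
  ultimately show ?thesis by (rule finite_subset)
qed

lemma edge_mem: "E v w \<Longrightarrow> {v, w} \<in> edge_set E"
  unfolding edge_set_def by blast

lemma inc_eq: "v \<in> V \<Longrightarrow> {e \<in> edge_set E. v \<in> e} = (\<lambda>w. {v, w}) ` {w \<in> V. E v w}"
proof (intro set_eqI iffI)
  fix e assume v: "v \<in> V" and "e \<in> {e \<in> edge_set E. v \<in> e}"
  then have e: "e \<in> edge_set E" "v \<in> e" by auto
  then obtain a b where ab: "e = {a, b}" "E a b" "a \<noteq> b" "a \<in> V" "b \<in> V" using edge_cases by blast
  show "e \<in> (\<lambda>w. {v, w}) ` {w \<in> V. E v w}"
  proof (cases "v = a")
    case True then show ?thesis using ab by auto
  next
    case False then have "v = b" using ab e by auto
    then show ?thesis using ab Esym by (auto simp: insert_commute)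
  qed
next
  fix e assume "v \<in> V" "e \<in> (\<lambda>w. {v, w}) ` {w \<in> V. E v w}"
  then show "e \<in> {e \<in> edge_set E. v \<in> e}" using edge_mem by auto
qed

lemma inc_inj: "inj_on (\<lambda>w. {v, w}) {w \<in> V. E v w}"
  by (rule inj_onI) (auto simp: doubleton_eq_iff dest: EV)

lemma sum_inc: "v \<in> V \<Longrightarrow> (\<Sum>e\<in>{e \<in> edge_set E. v \<in> e}. h e) = (\<Sum>w\<in>{w \<in> V. E v w}. h {v, w})"
  unfolding inc_eq by (simp add: sum.reindex[OF inc_inj])

lemma card_inc: "v \<in> V \<Longrightarrow> card {e \<in> edge_set E. v \<in> e} = r"
  unfolding inc_eq by (simp add: card_image[OF inc_inj] deg)

lemma Rt_pair: "E v w \<Longrightarrow> Rt E x {v, w} = x v + x w"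
  unfolding Rt_def using edge_mem EV by simp

lemma lap_eq: "v \<in> V \<Longrightarrow> laplacian V E x v = real r * x v - (\<Sum>w\<in>{w \<in> V. E v w}. x w)"
  unfolding laplacian_def Defs.degree_def by (simp add: deg)

lemma RmRt: "v \<in> V \<Longrightarrow> Rm V E (Rt E x) v = 2 * real r * x v - laplacian V E x v"
proof -
  assume v: "v \<in> V"
  have "Rm V E (Rt E x) v = (\<Sum>w\<in>{w \<in> V. E v w}. x v + x w)"
    unfolding Rm_def using v by (simp add: sum_inc Rt_pair)
  also have "\<dots> = real r * x v + (\<Sum>w\<in>{w \<in> V. E v w}. x w)"
    using v by (simp add: sum.distrib deg)
  finally show ?thesis using lap_eq[OF v] by simp
qed

lemma Rm_vecs: "Rm V E q \<in> vecs V"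
  unfolding Rm_def vecs_def by simp

lemma Rt_adj: "vinner V x (Rm V E q) = vinner (edge_set E) (Rt E x) q"
proof -
  have "vinner V x (Rm V E q) = (\<Sum>v\<in>V. \<Sum>e\<in>edge_set E. if v \<in> e then x v * q e else 0)"
    unfolding vinner_def Rm_def
    by (intro sum.cong refl) (simp add: sum_distrib_left sum.inter_filter[OF finES, symmetric] if_distrib cong: if_cong)
  also have "\<dots> = (\<Sum>e\<in>edge_set E. \<Sum>v\<in>V. if v \<in> e then x v * q e else 0)" by (rule sum.swap)
  also have "\<dots> = vinner (edge_set E) (Rt E x) q"
    unfolding vinner_def Rt_def
  proof (intro sum.cong refl)
    fix e assume e: "e \<in> edge_set E"
    have "(\<Sum>v\<in>V. if v \<in> e then x v * q e else 0) = (\<Sum>v\<in>{v\<in>V. v \<in> e}. x v * q e)"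
      by (simp add: sum.inter_filter[OF finV])
    also have "{v\<in>V. v \<in> e} = e" using edge_sub[OF e] by blast
    finally show "(\<Sum>v\<in>V. if v \<in> e then x v * q e else 0) = (if e \<in> edge_set E then sum x e else 0) * q e"
      using e by (simp add: sum_distrib_right)
  qed
  finally show ?thesis .
qed

lemma edge_int: "e \<in> edge_set E \<Longrightarrow> f \<in> edge_set E \<Longrightarrow> e \<noteq> f \<Longrightarrow> e \<inter> f \<noteq> {} \<Longrightarrow> card (e \<inter> f) = 1"
proof -
  assume e: "e \<in> edge_set E" and f: "f \<in> edge_set E" and ne: "e \<noteq> f" and ni: "e \<inter> f \<noteq> {}"
  have c: "card (e \<inter> f) \<le> 2" using card_mono[OF edge_fin[OF e], of "e \<inter> f"] edge_card[OF e] by simp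
  have "card (e \<inter> f) \<noteq> 2"
  proof
    assume "card (e \<inter> f) = 2"
    then have "e \<inter> f = e" using card_subset_eq[OF edge_fin[OF e], of "e \<inter> f"] edge_card[OF e] by simp
    then have "e \<subseteq> f" by blast
    then have "e = f" using card_subset_eq[OF edge_fin[OF f]] edge_card[OF e] edge_card[OF f] by simp
    then show False using ne by simp
  qed
  moreover have "card (e \<inter> f) \<noteq> 0" using ni edge_fin[OF e] by simp
  ultimately show ?thesis using c by linarith
qed

lemma RtRm: "e \<in> edge_set E \<Longrightarrow> Rt E (Rm V E q) e = 2 * q e + (\<Sum>f\<in>{f \<in> edge_set E. f \<noteq> e \<and> e \<inter> f \<noteq> {}}. q f)"
proof -
  assume e: "e \<in> edge_set E"
  have "Rt E (Rm V E q) e = (\<Sum>u\<in>e. Rm V E q u)" using e by (simp add: Rt_def)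
  also have "\<dots> = (\<Sum>u\<in>e. \<Sum>f\<in>edge_set E. if u \<in> f then q f else 0)"
  proof (rule sum.cong[OF refl])
    fix u assume "u \<in> e"
    then have "u \<in> V" using edge_sub[OF e] by blast
    then show "Rm V E q u = (\<Sum>f\<in>edge_set E. if u \<in> f then q f else 0)"
      unfolding Rm_def by (simp add: sum.inter_filter[OF finES])
  qed
  also have "\<dots> = (\<Sum>f\<in>edge_set E. \<Sum>u\<in>e. if u \<in> f then q f else 0)" by (rule sum.swap)
  also have "\<dots> = (\<Sum>f\<in>edge_set E. real (card (e \<inter> f)) * q f)"
  proof (intro sum.cong refl)
    fix f assume "f \<in> edge_set E"
    have "(\<Sum>u\<in>e. if u \<in> f then q f else 0) = (\<Sum>u\<in>e \<inter> f. q f)"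
      using sum.inter_restrict[OF edge_fin[OF e], of "\<lambda>_. q f" f] by simp
    then show "(\<Sum>u\<in>e. if u \<in> f then q f else 0) = real (card (e \<inter> f)) * q f" by simp
  qed
  also have "\<dots> = (\<Sum>f\<in>edge_set E. (if f = e then 2 * q f else 0) + (if f \<noteq> e \<and> e \<inter> f \<noteq> {} then q f else 0))"
  proof (intro sum.cong refl)
    fix f assume f: "f \<in> edge_set E"
    show "real (card (e \<inter> f)) * q f = (if f = e then 2 * q f else 0) + (if f \<noteq> e \<and> e \<inter> f \<noteq> {} then q f else 0)"
      using edge_int[OF e f] edge_card[OF e] by (cases "f = e"; cases "e \<inter> f = {}") auto
  qed
  also have "\<dots> = 2 * q e + (\<Sum>f\<in>{f \<in> edge_set E. f \<noteq> e \<and> e \<inter> f \<noteq> {}}. q f)"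
    using e by (simp add: sum.distrib sum.delta[OF finES] sum.inter_filter[OF finES])
  finally show ?thesis .
qed

lemma Inl_QV: "Inl v \<in> Q_vertices V E \<longleftrightarrow> v \<in> V"
  unfolding Q_vertices_def by auto

lemma Inr_QV: "Inr e \<in> Q_vertices V E \<longleftrightarrow> e \<in> edge_set E"
  unfolding Q_vertices_def by auto

lemma finQV: "finite (Q_vertices V E)"
  unfolding Q_vertices_def using finV finES by simp

lemma vinner_Q: "vinner (Q_vertices V E) z w =
   vinner V (\<lambda>v. z (Inl v)) (\<lambda>v. w (Inl v)) + vinner (edge_set E) (\<lambda>e. z (Inr e)) (\<lambda>e. w (Inr e))"
proof -
  have "vinner (Q_vertices V E) z w = (\<Sum>s\<in>Inl ` V. z s * w s) + (\<Sum>s\<in>Inr ` edge_set E. z s * w s)"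
    unfolding vinner_def Q_vertices_def using finV finES by (intro sum.union_disjoint) auto
  also have "\<dots> = vinner V (\<lambda>v. z (Inl v)) (\<lambda>v. w (Inl v)) + vinner (edge_set E) (\<lambda>e. z (Inr e)) (\<lambda>e. w (Inr e))"
    unfolding vinner_def by (simp add: sum.reindex)
  finally show ?thesis .
qed

lemma nbr_Inl: "v \<in> V \<Longrightarrow> {w \<in> Q_vertices V E. Q_adj E (Inl v) w} = Inr ` {e \<in> edge_set E. v \<in> e}"
proof (intro set_eqI iffI)
  fix x :: "'v + 'v set" assume "x \<in> {w \<in> Q_vertices V E. Q_adj E (Inl v) w}"
  then show "x \<in> Inr ` {e \<in> edge_set E. v \<in> e}" by (cases x) (auto simp: Q_vertices_def Q_adj_def)
next
  fix x :: "'v + 'v set" assume "v \<in> V" "x \<in> Inr ` {e \<in> edge_set E. v \<in> e}"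
  then show "x \<in> {w \<in> Q_vertices V E. Q_adj E (Inl v) w}" by (auto simp: Q_vertices_def Q_adj_def)
qed

lemma nbr_Inr: "e \<in> edge_set E \<Longrightarrow> {w \<in> Q_vertices V E. Q_adj E (Inr e) w} =
    Inl ` e \<union> Inr ` {f \<in> edge_set E. f \<noteq> e \<and> e \<inter> f \<noteq> {}}"
proof (intro set_eqI iffI)
  fix x :: "'v + 'v set" assume "x \<in> {w \<in> Q_vertices V E. Q_adj E (Inr e) w}"
  then show "x \<in> Inl ` e \<union> Inr ` {f \<in> edge_set E. f \<noteq> e \<and> e \<inter> f \<noteq> {}}"
    by (cases x) (auto simp: Q_vertices_def Q_adj_def)
next
  fix x :: "'v + 'v set" assume e: "e \<in> edge_set E" and "x \<in> Inl ` e \<union> Inr ` {f \<in> edge_set E. f \<noteq> e \<and> e \<inter> f \<noteq> {}}"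
  then show "x \<in> {w \<in> Q_vertices V E. Q_adj E (Inr e) w}" using edge_sub[OF e] by (auto simp: Q_vertices_def Q_adj_def)
qed

lemma Rm_one: "v \<in> V \<Longrightarrow> Rm V E (\<lambda>_. 1) v = real r"
  unfolding Rm_def using card_inc by simp

lemma card_adj_edges: "e \<in> edge_set E \<Longrightarrow> real (card {f \<in> edge_set E. f \<noteq> e \<and> e \<inter> f \<noteq> {}}) = 2 * real r - 2"
proof -
  assume e: "e \<in> edge_set E"
  have "Rt E (Rm V E (\<lambda>_. 1)) e = (\<Sum>u\<in>e. Rm V E (\<lambda>_. 1) u)" unfolding Rt_def using e by simp
  also have "\<dots> = (\<Sum>u\<in>e. real r)" using edge_sub[OF e] Rm_one by (intro sum.cong) auto
  also have "\<dots> = 2 * real r" using edge_card[OF e] by simp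
  finally have "2 * real r = 2 + real (card {f \<in> edge_set E. f \<noteq> e \<and> e \<inter> f \<noteq> {}})"
    using RtRm[OF e, of "\<lambda>_. 1"] by simp
  then show ?thesis by simp
qed

lemma lapQ_Inl: "laplacian (Q_vertices V E) (Q_adj E) z (Inl v) =
   (if v \<in> V then real r * z (Inl v) - Rm V E (\<lambda>e. z (Inr e)) v else 0)"
proof (cases "v \<in> V")
  case True
  have "Defs.degree (Q_vertices V E) (Q_adj E) (Inl v) = r"
    unfolding Defs.degree_def nbr_Inl[OF True] by (simp add: card_image card_inc[OF True])
  moreover have "(\<Sum>w\<in>{w \<in> Q_vertices V E. Q_adj E (Inl v) w}. z w) = Rm V E (\<lambda>e. z (Inr e)) v"
    unfolding nbr_Inl[OF True] Rm_def using True by (simp add: sum.reindex)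
  ultimately show ?thesis unfolding laplacian_def using True Inl_QV by simp
next
  case False then show ?thesis unfolding laplacian_def using Inl_QV by simp
qed

lemma lapQ_Inr: "laplacian (Q_vertices V E) (Q_adj E) z (Inr e) =
   (if e \<in> edge_set E then (2 * real r + 2) * z (Inr e) - Rt E (\<lambda>v. z (Inl v)) e - Rt E (Rm V E (\<lambda>f. z (Inr f))) e else 0)"
proof (cases "e \<in> edge_set E")
  case True
  let ?F = "{f \<in> edge_set E. f \<noteq> e \<and> e \<inter> f \<noteq> {}}"
  have disj: "Inl ` e \<inter> Inr ` ?F = {}" by auto
  have finF: "finite ?F" using finES by simp
  have "real (Defs.degree (Q_vertices V E) (Q_adj E) (Inr e)) = real (card (Inl ` e \<union> Inr ` ?F))"
    unfolding Defs.degree_def nbr_Inr[OF True] ..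
  also have "\<dots> = real (card e + card ?F)"
    using card_Un_disjoint[OF _ _ disj] edge_fin[OF True] finF by (simp add: card_image)
  also have "\<dots> = 2 * real r"
    using edge_card[OF True] card_adj_edges[OF True] by simp
  finally have dg: "real (Defs.degree (Q_vertices V E) (Q_adj E) (Inr e)) = 2 * real r" .
  have "(\<Sum>w\<in>{w \<in> Q_vertices V E. Q_adj E (Inr e) w}. z w) = (\<Sum>w\<in>Inl ` e. z w) + (\<Sum>w\<in>Inr ` ?F. z w)"
    unfolding nbr_Inr[OF True] using edge_fin[OF True] finF by (intro sum.union_disjoint) auto
  also have "\<dots> = Rt E (\<lambda>v. z (Inl v)) e + (Rt E (Rm V E (\<lambda>f. z (Inr f))) e - 2 * z (Inr e))"
    using True RtRm[OF True, of "\<lambda>f. z (Inr f)"] by (simp add: sum.reindex Rt_def)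
  finally show ?thesis unfolding laplacian_def using True Inr_QV dg by (simp add: algebra_simps)
next
  case False then show ?thesis unfolding laplacian_def using Inr_QV by simp
qed

end



definition emb :: "('v \<Rightarrow> 'v \<Rightarrow> bool) \<Rightarrow> real \<Rightarrow> ('v \<Rightarrow> real) \<Rightarrow> ('v + 'v set \<Rightarrow> real)" where
  "emb E c x = case_sum x (\<lambda>e. c * Rt E x e)"

lemma emb_Inl[simp]: "emb E c x (Inl v) = x v" unfolding emb_def by simp
lemma emb_Inr[simp]: "emb E c x (Inr e) = c * Rt E x e" unfolding emb_def by simp

lemma Rt_scale: "Rt E (\<lambda>u. a * f u) e = a * Rt E f e"
  unfolding Rt_def by (simp add: sum_distrib_left)

lemma Rm_scale: "Rm V E (\<lambda>u. a * f u) v = a * Rm V E f v"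
  unfolding Rm_def by (simp add: sum_distrib_left)

lemma Rt_add: "Rt E (\<lambda>u. f u + g u) e = Rt E f e + Rt E g e"
  unfolding Rt_def by (simp add: sum.distrib)

definition cc :: "nat \<Rightarrow> real \<Rightarrow> real" where
  "cc r l = (real r + 1 - l) / (2 * real r + 2 - l)"

lemma alg1:
  fixes \<theta> l :: real
  assumes root: "l^2 - (real r + 2 + \<theta>) * l + (real r + 1) * \<theta> = 0" and ne: "l \<noteq> 2 * real r + 2"
  shows "cc r l \<noteq> 0" "cc r l * (2 * real r - \<theta>) = real r - l" "cc r l * (2 + \<theta> - l) = 1"
proof -
  have d: "2 * real r + 2 - l \<noteq> 0" using ne by simp
  have n: "real r + 1 - l \<noteq> 0"
  proof
    assume "real r + 1 - l = 0"
    then have "l = real r + 1" by simp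
    then have "l^2 - (real r + 2 + \<theta>) * l + (real r + 1) * \<theta> = - (real r + 1)"
      by (simp add: power2_eq_square algebra_simps)
    then show False using root by simp
  qed
  show "cc r l \<noteq> 0" unfolding cc_def using d n by simp
  have "(real r + 1 - l) * (2 * real r - \<theta>) = (real r - l) * (2 * real r + 2 - l)"
    using root by (simp add: power2_eq_square algebra_simps)
  then show "cc r l * (2 * real r - \<theta>) = real r - l" unfolding cc_def using d
    by (simp add: field_simps)
  have "(real r + 1 - l) * (2 + \<theta> - l) = 2 * real r + 2 - l"
    using root by (simp add: power2_eq_square algebra_simps)
  then show "cc r l * (2 + \<theta> - l) = 1" unfolding cc_def using d
    by (simp add: field_simps)
qed

context
  fixes V :: "'v set" and E :: "'v \<Rightarrow> 'v \<Rightarrow> bool" and r :: nat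
  assumes reg: "regular_graph V E r"
begin

lemma Rt_cong: "e \<in> edge_set E \<Longrightarrow> (\<And>u. u \<in> V \<Longrightarrow> f u = g u) \<Longrightarrow> Rt E f e = Rt E g e"
proof -
  assume e: "e \<in> edge_set E" and fg: "\<And>u. u \<in> V \<Longrightarrow> f u = g u"
  have "sum f e = sum g e" using edge_sub[OF reg e] fg by (intro sum.cong) auto
  then show ?thesis unfolding Rt_def by simp
qed

lemma RmRt_eig: "x \<in> lap_eigenspace V E \<theta> \<Longrightarrow> v \<in> V \<Longrightarrow> Rm V E (Rt E x) v = (2 * real r - \<theta>) * x v"
proof -
  assume x: "x \<in> lap_eigenspace V E \<theta>" and v: "v \<in> V"
  have "laplacian V E x v = \<theta> * x v" using eigsp_eq[OF x] by simp
  then show ?thesis using RmRt[OF reg v, of x] by (simp add: algebra_simps)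
qed

lemma RtRmRt_eig: "x \<in> lap_eigenspace V E \<theta> \<Longrightarrow> Rt E (Rm V E (Rt E x)) e = (2 * real r - \<theta>) * Rt E x e"
proof (cases "e \<in> edge_set E")
  case True
  assume x: "x \<in> lap_eigenspace V E \<theta>"
  have "Rt E (Rm V E (Rt E x)) e = Rt E (\<lambda>u. (2 * real r - \<theta>) * x u) e"
    by (rule Rt_cong[OF True], rule RmRt_eig[OF x])
  then show ?thesis by (simp add: Rt_scale)
next
  case False then show ?thesis by (simp add: Rt_def)
qed

lemma eig_le_2r:
  assumes x: "x \<in> lap_eigenspace V E \<theta>" and nz: "x \<noteq> (\<lambda>_. 0)"
  shows "\<theta> \<le> 2 * real r"
proof -
  have "vinner V x (Rm V E (Rt E x)) = vinner V x (\<lambda>u. (2 * real r - \<theta>) * x u)"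
    unfolding vinner_def using RmRt_eig[OF x] by (intro sum.cong) auto
  then have "(2 * real r - \<theta>) * vinner V x x = vinner (edge_set E) (Rt E x) (Rt E x)"
    using Rt_adj[OF reg] by (simp add: vinner_scale_right)
  moreover have "vinner V x x > 0" using vecs_nonzero[OF finV[OF reg] eigsp_vecs[OF x] nz] .
  ultimately show ?thesis using vinner_nonneg[of "edge_set E" "Rt E x"]
    by (smt (verit) mult_neg_pos)
qed

lemma emb_vecs: "x \<in> vecs V \<Longrightarrow> emb E c x \<in> vecs (Q_vertices V E)"
  unfolding vecs_def mem_Collect_eq
proof (intro allI impI)
  fix s assume x: "\<forall>u. u \<notin> V \<longrightarrow> x u = 0" and s: "s \<notin> Q_vertices V E"
  show "emb E c x s = 0"
  proof (cases s)
    case (Inl v) then show ?thesis using x s Inl_QV[OF reg] by simp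
  next
    case (Inr e) then show ?thesis using s Inr_QV[OF reg] by (simp add: Rt_def)
  qed
qed

lemma eigQ_iff:
  fixes \<theta> l :: real
  assumes root: "l^2 - (real r + 2 + \<theta>) * l + (real r + 1) * \<theta> = 0" and ne: "l \<noteq> 2 * real r + 2"
  shows "z \<in> lap_eigenspace (Q_vertices V E) (Q_adj E) l \<longleftrightarrow> (\<exists>x\<in>lap_eigenspace V E \<theta>. z = emb E (cc r l) x)"
proof -
  let ?c = "cc r l"
  note A = alg1[OF root ne]
  let ?QV = "Q_vertices V E"
  show ?thesis
  proof
    assume z: "z \<in> lap_eigenspace ?QV (Q_adj E) l"
    define p where "p = (\<lambda>v. z (Inl v))"
    define q where "q = (\<lambda>e. z (Inr e))"
    have zv: "z \<in> vecs ?QV" and zl: "laplacian ?QV (Q_adj E) z = (\<lambda>u. l * z u)"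
      using z unfolding lap_eigenspace_def by auto
    have pv: "p \<in> vecs V" using zv Inl_QV[OF reg] unfolding vecs_def p_def by simp
    have qz: "q e = 0" if "e \<notin> edge_set E" for e using zv Inr_QV[OF reg] that unfolding vecs_def q_def by simp
    have eq1: "real r * p v - Rm V E q v = l * p v" if "v \<in> V" for v
      using fun_cong[OF zl, of "Inl v"] that unfolding lapQ_Inl[OF reg] p_def q_def by simp
    have eq2: "(2 * real r + 2) * q e - Rt E p e - Rt E (Rm V E q) e = l * q e" if "e \<in> edge_set E" for e
      using fun_cong[OF zl, of "Inr e"] that unfolding lapQ_Inr[OF reg] p_def q_def by simp
    have Rmq: "Rm V E q v = (real r - l) * p v" if "v \<in> V" for v using eq1[OF that] by (simp add: algebra_simps)
    have qeq: "q = (\<lambda>e. ?c * Rt E p e)"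
    proof
      fix e show "q e = ?c * Rt E p e"
      proof (cases "e \<in> edge_set E")
        case True
        have "Rt E (Rm V E q) e = Rt E (\<lambda>u. (real r - l) * p u) e"
          by (rule Rt_cong[OF True], rule Rmq)
        then have "Rt E (Rm V E q) e = (real r - l) * Rt E p e" by (simp add: Rt_scale)
        then have "(2 * real r + 2 - l) * q e = (real r + 1 - l) * Rt E p e"
          using eq2[OF True] by (simp add: algebra_simps)
        then show ?thesis unfolding cc_def using ne by (simp add: field_simps)
      next
        case False then show ?thesis using qz by (simp add: Rt_def)
      qed
    qed
    have lp: "laplacian V E p = (\<lambda>u. \<theta> * p u)"
    proof
      fix v show "laplacian V E p v = \<theta> * p v"
      proof (cases "v \<in> V")
        case True
        have "Rm V E q v = ?c * Rm V E (Rt E p) v" unfolding qeq by (rule Rm_scale)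
        also have "\<dots> = ?c * (2 * real r * p v - laplacian V E p v)" using RmRt[OF reg True] by simp
        finally have "?c * (2 * real r * p v - laplacian V E p v) = (real r - l) * p v" using Rmq[OF True] by simp
        then have h: "?c * laplacian V E p v = (2 * real r * ?c - (real r - l)) * p v" by (simp add: algebra_simps)
        have "2 * real r * ?c - (real r - l) = ?c * \<theta>" using A(2) by (simp add: algebra_simps)
        then have "?c * laplacian V E p v = ?c * (\<theta> * p v)" using h by simp
        then show ?thesis using A(1) by simp
      next
        case False then show ?thesis using pv lap_vecs[of V E p] unfolding vecs_def by simp
      qed
    qed
    have "p \<in> lap_eigenspace V E \<theta>" unfolding lap_eigenspace_def using pv lp by simp
    moreover have "z = emb E ?c p"
    proof
      fix s show "z s = emb E ?c p s"
        using qeq unfolding p_def q_def by (cases s) (auto simp: fun_eq_iff)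
    qed
    ultimately show "\<exists>x\<in>lap_eigenspace V E \<theta>. z = emb E ?c x" by blast
  next
    assume "\<exists>x\<in>lap_eigenspace V E \<theta>. z = emb E ?c x"
    then obtain x where x: "x \<in> lap_eigenspace V E \<theta>" and zx: "z = emb E ?c x" by blast
    have xv: "x \<in> vecs V" using eigsp_vecs[OF x] .
    have "laplacian ?QV (Q_adj E) (emb E ?c x) = (\<lambda>u. l * emb E ?c x u)"
    proof
      fix s show "laplacian ?QV (Q_adj E) (emb E ?c x) s = l * emb E ?c x s"
      proof (cases s)
        case (Inl v)
        show ?thesis
        proof (cases "v \<in> V")
          case True
          have "Rm V E (\<lambda>e. ?c * Rt E x e) v = ?c * ((2 * real r - \<theta>) * x v)"
            using Rm_scale[of V E ?c "Rt E x" v] RmRt_eig[OF x True] by simp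
          also have "\<dots> = (?c * (2 * real r - \<theta>)) * x v" by simp
          also have "\<dots> = (real r - l) * x v" using A(2) by simp
          finally have "Rm V E (\<lambda>e. ?c * Rt E x e) v = (real r - l) * x v" .
          then show ?thesis unfolding Inl lapQ_Inl[OF reg] emb_Inl emb_Inr using True
            by (simp add: algebra_simps)
        next
          case False then show ?thesis unfolding Inl lapQ_Inl[OF reg] using xv unfolding vecs_def by simp
        qed
      next
        case (Inr e)
        show ?thesis
        proof (cases "e \<in> edge_set E")
          case True
          have "Rm V E (\<lambda>f. ?c * Rt E x f) = (\<lambda>u. ?c * Rm V E (Rt E x) u)"
            by (rule ext, rule Rm_scale)
          then have "Rt E (Rm V E (\<lambda>f. ?c * Rt E x f)) e = Rt E (\<lambda>u. ?c * Rm V E (Rt E x) u) e"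
            by simp
          also have "\<dots> = ?c * ((2 * real r - \<theta>) * Rt E x e)" by (simp add: Rt_scale RtRmRt_eig[OF x])
          finally have "Rt E (Rm V E (\<lambda>f. ?c * Rt E x f)) e = ?c * ((2 * real r - \<theta>) * Rt E x e)" .
          then have "laplacian ?QV (Q_adj E) (emb E ?c x) (Inr e) =
              ((2 * real r + 2) * ?c - 1 - ?c * (2 * real r - \<theta>)) * Rt E x e"
            unfolding lapQ_Inr[OF reg] emb_Inl emb_Inr using True by (simp add: algebra_simps)
          also have "(2 * real r + 2) * ?c - 1 - ?c * (2 * real r - \<theta>) = l * ?c"
            using A(3) by (simp add: algebra_simps)
          finally show ?thesis unfolding Inr by simp
        next
          case False then show ?thesis unfolding Inr lapQ_Inr[OF reg] by (simp add: Rt_def)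
        qed
      qed
    qed
    then show "z \<in> lap_eigenspace ?QV (Q_adj E) l"
      unfolding lap_eigenspace_def zx using emb_vecs[OF xv] by simp
  qed
qed

lemma vinner_emb_left:
  "vinner (Q_vertices V E) z (emb E c x') = vinner V (\<lambda>v. z (Inl v) + c * Rm V E (\<lambda>e. z (Inr e)) v) x'"
proof -
  have "vinner (Q_vertices V E) z (emb E c x') = vinner V (\<lambda>v. z (Inl v)) x' + vinner (edge_set E) (\<lambda>e. z (Inr e)) (\<lambda>e. c * Rt E x' e)"
    unfolding vinner_Q[OF reg] by simp
  also have "vinner (edge_set E) (\<lambda>e. z (Inr e)) (\<lambda>e. c * Rt E x' e) = c * vinner V (Rm V E (\<lambda>e. z (Inr e))) x'"
    unfolding vinner_scale_right using Rt_adj[OF reg, of x' "\<lambda>e. z (Inr e)"] by (simp add: vinner_sym)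
  finally show ?thesis by (simp add: vinner_add_left vinner_scale_left)
qed

lemma vinner_emb_emb:
  assumes x': "x' \<in> lap_eigenspace V E \<theta>"
  shows "vinner (Q_vertices V E) (emb E c y) (emb E c x') = (1 + c^2 * (2 * real r - \<theta>)) * vinner V y x'"
proof -
  have "vinner (Q_vertices V E) (emb E c y) (emb E c x') = vinner V y x' + vinner (edge_set E) (\<lambda>e. c * Rt E y e) (\<lambda>e. c * Rt E x' e)"
    unfolding vinner_Q[OF reg] by simp
  also have "vinner (edge_set E) (\<lambda>e. c * Rt E y e) (\<lambda>e. c * Rt E x' e) = c^2 * vinner (edge_set E) (Rt E y) (Rt E x')"
    unfolding vinner_scale_right vinner_scale_left by (simp add: power2_eq_square)
  also have "vinner (edge_set E) (Rt E y) (Rt E x') = vinner V y (Rm V E (Rt E x'))"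
    using Rt_adj[OF reg] by simp
  also have "\<dots> = vinner V y (\<lambda>u. (2 * real r - \<theta>) * x' u)"
    unfolding vinner_def using RmRt_eig[OF x'] by (intro sum.cong) auto
  finally show ?thesis unfolding vinner_scale_right by (simp add: algebra_simps)
qed

definition Xv :: "nat \<Rightarrow> real \<Rightarrow> real \<Rightarrow> ('v + 'v set \<Rightarrow> real) \<Rightarrow> ('v \<Rightarrow> real)" where
  "Xv r' \<theta> l z = eig_proj V E \<theta> (\<lambda>v. z (Inl v) + cc r' l * Rm V E (\<lambda>e. z (Inr e)) v)"

lemma projQ:
  fixes \<theta> l :: real
  assumes root: "l^2 - (real r + 2 + \<theta>) * l + (real r + 1) * \<theta> = 0" and ne: "l \<noteq> 2 * real r + 2"
    and le: "\<theta> \<le> 2 * real r"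
  shows "eig_proj (Q_vertices V E) (Q_adj E) l z =
     emb E (cc r l) (\<lambda>u. (1 / (1 + (cc r l)^2 * (2 * real r - \<theta>))) * Xv r \<theta> l z u)"
proof (rule eig_proj_eqI[OF finQV[OF reg]])
  let ?c = "cc r l"
  let ?d = "1 + ?c^2 * (2 * real r - \<theta>)"
  have dpos: "?d > 0" using le by (smt (verit) mult_nonneg_nonneg zero_le_power2)
  have XE: "Xv r \<theta> l z \<in> lap_eigenspace V E \<theta>" unfolding Xv_def using eig_proj_prop[OF finV[OF reg]] by blast
  then have XE': "(\<lambda>u. (1 / ?d) * Xv r \<theta> l z u) \<in> lap_eigenspace V E \<theta>" by (rule eigsp_scale)
  then show "emb E ?c (\<lambda>u. (1 / ?d) * Xv r \<theta> l z u) \<in> lap_eigenspace (Q_vertices V E) (Q_adj E) l"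
    using eigQ_iff[OF root ne] by blast
  show "\<forall>w\<in>lap_eigenspace (Q_vertices V E) (Q_adj E) l.
          vinner (Q_vertices V E) (\<lambda>u. z u - emb E ?c (\<lambda>u. (1 / ?d) * Xv r \<theta> l z u) u) w = 0"
  proof
    fix w assume "w \<in> lap_eigenspace (Q_vertices V E) (Q_adj E) l"
    then obtain x' where x': "x' \<in> lap_eigenspace V E \<theta>" and wx: "w = emb E ?c x'"
      using eigQ_iff[OF root ne] by blast
    have "vinner (Q_vertices V E) z w = vinner V (Xv r \<theta> l z) x'"
    proof -
      have "vinner (Q_vertices V E) z w = vinner V (\<lambda>v. z (Inl v) + ?c * Rm V E (\<lambda>e. z (Inr e)) v) x'"
        unfolding wx by (rule vinner_emb_left)
      also have "\<dots> = vinner V (Xv r \<theta> l z) x'"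
        using eig_proj_prop[OF finV[OF reg], of E \<theta> "\<lambda>v. z (Inl v) + ?c * Rm V E (\<lambda>e. z (Inr e)) v"] x'
        unfolding Xv_def vinner_diff_left by simp
      finally show ?thesis .
    qed
    moreover have "vinner (Q_vertices V E) (emb E ?c (\<lambda>u. (1 / ?d) * Xv r \<theta> l z u)) w = vinner V (Xv r \<theta> l z) x'"
      unfolding wx vinner_emb_emb[OF x'] vinner_scale_left using dpos by simp
    ultimately show "vinner (Q_vertices V E) (\<lambda>u. z u - emb E ?c (\<lambda>u. (1 / ?d) * Xv r \<theta> l z u) u) w = 0"
      unfolding vinner_diff_left by simp
  qed
qed

lemma eigQ_ev:
  fixes \<theta> l :: real
  assumes root: "l^2 - (real r + 2 + \<theta>) * l + (real r + 1) * \<theta> = 0" and ne: "l \<noteq> 2 * real r + 2"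
    and ev: "lap_eigenvalue V E \<theta>"
  shows "lap_eigenvalue (Q_vertices V E) (Q_adj E) l"
proof -
  obtain x where x: "x \<in> lap_eigenspace V E \<theta>" "x \<noteq> (\<lambda>_. 0)" using ev unfolding lap_eigenvalue_def by blast
  have "emb E (cc r l) x \<in> lap_eigenspace (Q_vertices V E) (Q_adj E) l" using eigQ_iff[OF root ne] x(1) by blast
  moreover have "emb E (cc r l) x \<noteq> (\<lambda>_. 0)"
  proof
    assume "emb E (cc r l) x = (\<lambda>_. 0)"
    then have "\<forall>v. x v = 0" by (metis emb_Inl)
    then show False using x(2) by auto
  qed
  ultimately show ?thesis unfolding lap_eigenvalue_def by blast
qed

lemma norm_F:
  fixes \<theta> l :: real
  assumes root: "l^2 - (real r + 2 + \<theta>) * l + (real r + 1) * \<theta> = 0" and ne: "l \<noteq> 2 * real r + 2"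
    and le: "\<theta> \<le> 2 * real r"
  shows "vinner (Q_vertices V E) (eig_proj (Q_vertices V E) (Q_adj E) l z) (eig_proj (Q_vertices V E) (Q_adj E) l z)
     = vinner V (Xv r \<theta> l z) (Xv r \<theta> l z) / (1 + (cc r l)^2 * (2 * real r - \<theta>))"
proof -
  let ?c = "cc r l"
  let ?d = "1 + ?c^2 * (2 * real r - \<theta>)"
  have dpos: "?d > 0" using le by (smt (verit) mult_nonneg_nonneg zero_le_power2)
  have XE: "Xv r \<theta> l z \<in> lap_eigenspace V E \<theta>" unfolding Xv_def using eig_proj_prop[OF finV[OF reg]] by blast
  then have XE': "(\<lambda>u. (1 / ?d) * Xv r \<theta> l z u) \<in> lap_eigenspace V E \<theta>" by (rule eigsp_scale)
  have h: "\<And>D X::real. D > 0 \<Longrightarrow> D * ((1 / D) * ((1 / D) * X)) = X / D" by (simp add: field_simps)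
  show ?thesis unfolding projQ[OF root ne le] vinner_emb_emb[OF XE'] vinner_scale_left vinner_scale_right
    by (rule h[OF dpos])
qed

lemma Xv_expand:
  "vinner V (Xv r \<theta> l z) (Xv r \<theta> l z) =
     vinner V (eig_proj V E \<theta> (\<lambda>v. z (Inl v))) (eig_proj V E \<theta> (\<lambda>v. z (Inl v)))
     + 2 * cc r l * vinner V (eig_proj V E \<theta> (\<lambda>v. z (Inl v))) (eig_proj V E \<theta> (Rm V E (\<lambda>e. z (Inr e))))
     + (cc r l)^2 * vinner V (eig_proj V E \<theta> (Rm V E (\<lambda>e. z (Inr e)))) (eig_proj V E \<theta> (Rm V E (\<lambda>e. z (Inr e))))"
  unfolding Xv_def eig_proj_lin[OF finV[OF reg]] vinner_expand ..

lemma Rt_zero_2r: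
  assumes x: "x \<in> lap_eigenspace V E (2 * real r)" and e: "e \<in> edge_set E"
  shows "Rt E x e = 0"
proof -
  have "vinner (edge_set E) (Rt E x) (Rt E x) = vinner V x (Rm V E (Rt E x))" using Rt_adj[OF reg] by simp
  also have "\<dots> = vinner V x (\<lambda>u. (2 * real r - 2 * real r) * x u)"
    unfolding vinner_def using RmRt_eig[OF x] by (intro sum.cong) auto
  also have "\<dots> = 0" by (simp add: vinner_def)
  finally show ?thesis using vinner_zero_iff[OF finES[OF reg]] e by blast
qed

lemma proj_Rm_2r: "eig_proj V E (2 * real r) (Rm V E q) = (\<lambda>_. 0)"
proof (rule eig_proj_eqI[OF finV[OF reg]])
  show "(\<lambda>_. 0) \<in> lap_eigenspace V E (2 * real r)" using eigsp_subsp unfolding subsp_def by blast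
  show "\<forall>w\<in>lap_eigenspace V E (2 * real r). vinner V (\<lambda>u. Rm V E q u - 0) w = 0"
  proof
    fix w assume w: "w \<in> lap_eigenspace V E (2 * real r)"
    have "vinner V (\<lambda>u. Rm V E q u - 0) w = vinner V w (Rm V E q)" by (simp add: vinner_sym)
    also have "\<dots> = vinner (edge_set E) (Rt E w) q" by (rule Rt_adj[OF reg])
    also have "\<dots> = 0" unfolding vinner_def using Rt_zero_2r[OF w] by simp
    finally show "vinner V (\<lambda>u. Rm V E q u - 0) w = 0" .
  qed
qed

lemma quad_two_roots:
  fixes k m c1 c2 x y w :: real
  assumes "c1 \<noteq> c2" "k \<noteq> 0" "k * c1^2 - m * c1 - 1 = 0" "k * c2^2 - m * c2 - 1 = 0"
    "x + 2 * c1 * y + c1^2 * w = 0" "x + 2 * c2 * y + c2^2 * w = 0"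
  shows "2 * y = m * x"
proof -
  have i1: "(c1 - c2) * (2 * y + (c1 + c2) * w) = (x + 2 * c1 * y + c1^2 * w) - (x + 2 * c2 * y + c2^2 * w)"
    by (simp add: power2_eq_square algebra_simps)
  then have "(c1 - c2) * (2 * y + (c1 + c2) * w) = 0" using assms(5,6) by simp
  then have a: "2 * y + (c1 + c2) * w = 0" using assms(1) by simp
  have i2: "(c1 - c2) * (k * (c1 + c2) - m) = (k * c1^2 - m * c1 - 1) - (k * c2^2 - m * c2 - 1)"
    by (simp add: power2_eq_square algebra_simps)
  then have "(c1 - c2) * (k * (c1 + c2) - m) = 0" using assms(3,4) by simp
  then have b: "k * (c1 + c2) = m" using assms(1) by simp
  have i3: "x - c1 * c2 * w = (x + 2 * c1 * y + c1^2 * w) - c1 * (2 * y + (c1 + c2) * w)"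
    by (simp add: power2_eq_square algebra_simps)
  then have cx: "x = c1 * c2 * w" using assms(5) a by simp
  have i4: "k * c1 * c2 + 1 = c1 * (k * (c1 + c2) - m) - (k * c1^2 - m * c1 - 1)"
    by (simp add: power2_eq_square algebra_simps)
  then have d: "k * c1 * c2 = -1" using assms(3) b by simp
  have "k * (2 * y) = k * (2 * y + (c1 + c2) * w) - (k * (c1 + c2)) * w" by (simp add: algebra_simps)
  also have "\<dots> = - m * w" using a b by simp
  also have "\<dots> = m * (k * c1 * c2) * w" using d by simp
  also have "\<dots> = k * (m * x)" using cx by (simp add: algebra_simps)
  finally have "k * (2 * y) = k * (m * x)" .
  then show ?thesis using assms(2) by simp
qed

end

lemma disc_pos: "(real r + 2 - \<theta>)^2 + 4 * \<theta> > 0"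
proof -
  have "(real r + 2 - \<theta>)^2 + 4 * \<theta> = (\<theta> - real r)^2 + 4 * real r + 4"
    by (simp add: power2_eq_square algebra_simps)
  moreover have "(\<theta> - real r)^2 \<ge> 0" by simp
  moreover have "real r \<ge> 0" by simp
  ultimately show ?thesis by linarith
qed

lemma theta_pm_root:
  "(theta_plus r \<theta>)^2 - (real r + 2 + \<theta>) * theta_plus r \<theta> + (real r + 1) * \<theta> = 0"
  "(theta_minus r \<theta>)^2 - (real r + 2 + \<theta>) * theta_minus r \<theta> + (real r + 1) * \<theta> = 0"
proof -
  define D where "D = (real r + 2 - \<theta>)^2 + 4 * \<theta>"
  have D: "D > 0" unfolding D_def by (rule disc_pos)
  have sq: "sqrt D * sqrt D = D" using D by simp
  have DS: "D = (\<theta> + 2 + real r)^2 - 4 * ((real r + 1) * \<theta>)" unfolding D_def by (simp add: power2_eq_square algebra_simps)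
  show "(theta_plus r \<theta>)^2 - (real r + 2 + \<theta>) * theta_plus r \<theta> + (real r + 1) * \<theta> = 0"
    unfolding theta_plus_def D_def[symmetric] using sq DS by (simp add: power2_eq_square field_simps, (simp add: algebra_simps)?)
  show "(theta_minus r \<theta>)^2 - (real r + 2 + \<theta>) * theta_minus r \<theta> + (real r + 1) * \<theta> = 0"
    unfolding theta_minus_def D_def[symmetric] using sq DS by (simp add: power2_eq_square field_simps, (simp add: algebra_simps)?)
qed

lemma theta_pm_ne:
  "theta_plus r \<theta> \<noteq> theta_minus r \<theta>"
proof -
  have "sqrt ((real r + 2 - \<theta>)^2 + 4 * \<theta>) > 0" using disc_pos by simp
  then show ?thesis unfolding theta_plus_def theta_minus_def by simp
qed

lemma root_ne_2r2:
  fixes l \<theta> :: real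
  assumes "l^2 - (real r + 2 + \<theta>) * l + (real r + 1) * \<theta> = 0" "\<theta> \<noteq> 2 * real r"
  shows "l \<noteq> 2 * real r + 2"
proof
  assume "l = 2 * real r + 2"
  then have "l^2 - (real r + 2 + \<theta>) * l + (real r + 1) * \<theta> = (real r + 1) * (2 * real r - \<theta>)"
    by (simp add: power2_eq_square algebra_simps)
  then show False using assms by simp
qed

lemma cc_inj:
  fixes l1 l2 :: real
  assumes "l1 \<noteq> 2 * real r + 2" "l2 \<noteq> 2 * real r + 2" "l1 \<noteq> l2"
  shows "cc r l1 \<noteq> cc r l2"
proof
  assume "cc r l1 = cc r l2"
  then have "(real r + 1 - l1) * (2 * real r + 2 - l2) = (real r + 1 - l2) * (2 * real r + 2 - l1)"
    unfolding cc_def using assms(1,2) by (simp add: field_simps)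
  then have "(real r + 1) * (l2 - l1) = 0" by (simp add: algebra_simps)
  then show False using assms(3) by simp
qed

lemma cc_quad:
  fixes l \<theta> :: real
  assumes root: "l^2 - (real r + 2 + \<theta>) * l + (real r + 1) * \<theta> = 0" and ne: "l \<noteq> 2 * real r + 2"
  shows "(2 * real r - \<theta>) * (cc r l)^2 - (real r - 2 - \<theta>) * cc r l - 1 = 0"
proof -
  note A = alg1[OF root ne]
  have "(2 * real r - \<theta>) * (cc r l)^2 = cc r l * (cc r l * (2 * real r - \<theta>))" by (simp add: power2_eq_square algebra_simps)
  also have "\<dots> = cc r l * (real r - l)" using A(2) by simp
  finally have "(2 * real r - \<theta>) * (cc r l)^2 = cc r l * (real r - l)" .
  moreover have "(real r - 2 - \<theta>) * cc r l + 1 = cc r l * (real r - l)" using A(3) by (simp add: algebra_simps)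
  ultimately show ?thesis by simp
qed

definition pz :: "('v + 'v set \<Rightarrow> real) \<Rightarrow> 'v \<Rightarrow> real" where "pz z = (\<lambda>v. z (Inl v))"
definition qz :: "('v + 'v set \<Rightarrow> real) \<Rightarrow> 'v set \<Rightarrow> real" where "qz z = (\<lambda>e. z (Inr e))"

context
  fixes V :: "'v set" and E :: "'v \<Rightarrow> 'v \<Rightarrow> bool" and r :: nat
  assumes reg: "regular_graph V E r"
begin

lemma per_theta:
  fixes \<theta> :: real and z z' :: "'v + 'v set \<Rightarrow> real"
  assumes ev: "lap_eigenvalue V E \<theta>"
    and nrm: "\<And>l. lap_eigenvalue (Q_vertices V E) (Q_adj E) l \<Longrightarrow>
      vinner (Q_vertices V E) (eig_proj (Q_vertices V E) (Q_adj E) l z) (eig_proj (Q_vertices V E) (Q_adj E) l z)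
      = vinner (Q_vertices V E) (eig_proj (Q_vertices V E) (Q_adj E) l z') (eig_proj (Q_vertices V E) (Q_adj E) l z')"
  shows "2 * (vinner V (eig_proj V E \<theta> (pz z)) (eig_proj V E \<theta> (Rm V E (qz z)))
            - vinner V (eig_proj V E \<theta> (pz z')) (eig_proj V E \<theta> (Rm V E (qz z'))))
       = (real r - 2 - \<theta>) * (vinner V (eig_proj V E \<theta> (pz z)) (eig_proj V E \<theta> (pz z))
            - vinner V (eig_proj V E \<theta> (pz z')) (eig_proj V E \<theta> (pz z')))"
proof -
  let ?P = "eig_proj V E \<theta>"
  define a where "a y = vinner V (?P (pz y)) (?P (pz y))" for y
  define g where "g y = vinner V (?P (pz y)) (?P (Rm V E (qz y)))" for y
  define b where "b y = vinner V (?P (Rm V E (qz y))) (?P (Rm V E (qz y)))" for y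
  obtain x0 where x0: "x0 \<in> lap_eigenspace V E \<theta>" "x0 \<noteq> (\<lambda>_. 0)" using ev unfolding lap_eigenvalue_def by blast
  have le: "\<theta> \<le> 2 * real r" by (rule eig_le_2r[OF reg x0])
  have key: "(a z - a z') + 2 * cc r l * (g z - g z') + (cc r l)^2 * (b z - b z') = 0"
    if root: "l^2 - (real r + 2 + \<theta>) * l + (real r + 1) * \<theta> = 0" and ne: "l \<noteq> 2 * real r + 2" for l
  proof -
    let ?d = "1 + (cc r l)^2 * (2 * real r - \<theta>)"
    have dpos: "?d > 0" using le by (smt (verit) mult_nonneg_nonneg zero_le_power2)
    have "vinner V (Xv V E r \<theta> l z) (Xv V E r \<theta> l z) / ?d = vinner V (Xv V E r \<theta> l z') (Xv V E r \<theta> l z') / ?d"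
      using nrm[OF eigQ_ev[OF reg root ne ev]] norm_F[OF reg root ne le] by simp
    then have "vinner V (Xv V E r \<theta> l z) (Xv V E r \<theta> l z) = vinner V (Xv V E r \<theta> l z') (Xv V E r \<theta> l z')"
      using dpos by simp
    then show ?thesis unfolding Xv_expand[OF reg] a_def g_def b_def pz_def qz_def by (simp add: algebra_simps)
  qed
  show ?thesis
  proof (cases "\<theta> = 2 * real r")
    case True
    have B0: "?P (Rm V E (qz y)) = (\<lambda>_. 0)" for y unfolding True by (rule proj_Rm_2r[OF reg])
    have "real r ^ 2 - (real r + 2 + \<theta>) * real r + (real r + 1) * \<theta> = 0"
      unfolding True by (simp add: power2_eq_square algebra_simps)
    moreover have "real r \<noteq> 2 * real r + 2" by simp
    ultimately have "(a z - a z') + 2 * cc r (real r) * (g z - g z') + (cc r (real r))^2 * (b z - b z') = 0"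
      by (rule key)
    moreover have "g y = 0" "b y = 0" for y unfolding g_def b_def B0 by simp_all
    ultimately have "a z - a z' = 0" by simp
    then show ?thesis unfolding a_def[symmetric] g_def[symmetric] using \<open>\<And>y. g y = 0\<close> by simp
  next
    case False
    let ?l1 = "theta_plus r \<theta>" and ?l2 = "theta_minus r \<theta>"
    have r1: "?l1^2 - (real r + 2 + \<theta>) * ?l1 + (real r + 1) * \<theta> = 0" and r2: "?l2^2 - (real r + 2 + \<theta>) * ?l2 + (real r + 1) * \<theta> = 0"
      by (rule theta_pm_root)+
    have n1: "?l1 \<noteq> 2 * real r + 2" by (rule root_ne_2r2[OF r1 False])
    have n2: "?l2 \<noteq> 2 * real r + 2" by (rule root_ne_2r2[OF r2 False])
    have "2 * (g z - g z') = (real r - 2 - \<theta>) * (a z - a z')"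
    proof (rule quad_two_roots[OF reg])
      show "cc r ?l1 \<noteq> cc r ?l2" by (rule cc_inj[OF n1 n2 theta_pm_ne])
      show "2 * real r - \<theta> \<noteq> 0" using False by simp
      show "(2 * real r - \<theta>) * (cc r ?l1)^2 - (real r - 2 - \<theta>) * cc r ?l1 - 1 = 0" by (rule cc_quad[OF r1 n1])
      show "(2 * real r - \<theta>) * (cc r ?l2)^2 - (real r - 2 - \<theta>) * cc r ?l2 - 1 = 0" by (rule cc_quad[OF r2 n2])
      show "a z - a z' + 2 * cc r ?l1 * (g z - g z') + (cc r ?l1)^2 * (b z - b z') = 0" by (rule key[OF r1 n1])
      show "a z - a z' + 2 * cc r ?l2 * (g z - g z') + (cc r ?l2)^2 * (b z - b z') = 0" by (rule key[OF r2 n2])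
    qed
    then show ?thesis unfolding a_def g_def .
  qed
qed

lemma spec_E:
  fixes z z' :: "'v + 'v set \<Rightarrow> real"
  assumes nrm: "\<And>l. lap_eigenvalue (Q_vertices V E) (Q_adj E) l \<Longrightarrow>
      vinner (Q_vertices V E) (eig_proj (Q_vertices V E) (Q_adj E) l z) (eig_proj (Q_vertices V E) (Q_adj E) l z)
      = vinner (Q_vertices V E) (eig_proj (Q_vertices V E) (Q_adj E) l z') (eig_proj (Q_vertices V E) (Q_adj E) l z')"
  shows "2 * (vinner V (pz z) (Rm V E (qz z)) - vinner V (pz z') (Rm V E (qz z')))
     = (real r - 2) * (vinner V (pz z) (pz z) - vinner V (pz z') (pz z'))
       - (vinner V (pz z) (laplacian V E (pz z)) - vinner V (pz z') (laplacian V E (pz z')))"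
    and "2 * (vinner V (laplacian V E (pz z)) (Rm V E (qz z)) - vinner V (laplacian V E (pz z')) (Rm V E (qz z')))
     = (real r - 2) * (vinner V (pz z) (laplacian V E (pz z)) - vinner V (pz z') (laplacian V E (pz z')))
       - (vinner V (laplacian V E (pz z)) (laplacian V E (pz z)) - vinner V (laplacian V E (pz z')) (laplacian V E (pz z')))"
proof -
  have sgr: "simple_graph V E" by (rule sg[OF reg])
  let ?T = "{\<theta>. lap_eigenvalue V E \<theta>}"
  define A where "A \<theta> y = vinner V (eig_proj V E \<theta> (pz y)) (eig_proj V E \<theta> (pz y))" for \<theta> y
  define G where "G \<theta> y = vinner V (eig_proj V E \<theta> (pz y)) (eig_proj V E \<theta> (Rm V E (qz y)))" for \<theta> y
  have per: "2 * (G \<theta> z - G \<theta> z') = (real r - 2 - \<theta>) * (A \<theta> z - A \<theta> z')" if "\<theta> \<in> ?T" for \<theta>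
    unfolding A_def G_def using per_theta[of \<theta> z z'] that nrm by simp
  have sA: "vinner V (pz y) (pz y) = (\<Sum>\<theta>\<in>?T. A \<theta> y)" for y unfolding A_def by (rule spec_inner[OF sgr])
  have sG: "vinner V (pz y) (Rm V E (qz y)) = (\<Sum>\<theta>\<in>?T. G \<theta> y)" for y unfolding G_def by (rule spec_inner[OF sgr])
  have sLA: "vinner V (pz y) (laplacian V E (pz y)) = (\<Sum>\<theta>\<in>?T. \<theta> * A \<theta> y)" for y unfolding A_def by (rule spec_lap[OF sgr])
  have sLLA: "vinner V (laplacian V E (pz y)) (laplacian V E (pz y)) = (\<Sum>\<theta>\<in>?T. \<theta>^2 * A \<theta> y)" for y
    unfolding A_def by (rule spec_lap2[OF sgr])
  have sLG: "vinner V (laplacian V E (pz y)) (Rm V E (qz y)) = (\<Sum>\<theta>\<in>?T. \<theta> * G \<theta> y)" for y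
  proof -
    have "vinner V (laplacian V E (pz y)) (Rm V E (qz y)) = vinner V (Rm V E (qz y)) (laplacian V E (pz y))" by (rule vinner_sym)
    also have "\<dots> = (\<Sum>\<theta>\<in>?T. \<theta> * vinner V (eig_proj V E \<theta> (Rm V E (qz y))) (eig_proj V E \<theta> (pz y)))" by (rule spec_lap[OF sgr])
    also have "\<dots> = (\<Sum>\<theta>\<in>?T. \<theta> * G \<theta> y)" unfolding G_def by (simp add: vinner_sym)
    finally show ?thesis .
  qed
  have e1: "(\<Sum>\<theta>\<in>?T. 2 * (G \<theta> z - G \<theta> z')) = (\<Sum>\<theta>\<in>?T. (real r - 2 - \<theta>) * (A \<theta> z - A \<theta> z'))"
    using per by (intro sum.cong) auto
  have e2: "(\<Sum>\<theta>\<in>?T. \<theta> * (2 * (G \<theta> z - G \<theta> z'))) = (\<Sum>\<theta>\<in>?T. \<theta> * ((real r - 2 - \<theta>) * (A \<theta> z - A \<theta> z')))"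
    using per by (intro sum.cong) auto
  have l1: "(\<Sum>\<theta>\<in>?T. 2 * (G \<theta> z - G \<theta> z')) = 2 * ((\<Sum>\<theta>\<in>?T. G \<theta> z) - (\<Sum>\<theta>\<in>?T. G \<theta> z'))"
    by (simp add: sum_distrib_left sum_subtractf)
  have r1: "(\<Sum>\<theta>\<in>?T. (real r - 2 - \<theta>) * (A \<theta> z - A \<theta> z')) =
     (real r - 2) * ((\<Sum>\<theta>\<in>?T. A \<theta> z) - (\<Sum>\<theta>\<in>?T. A \<theta> z')) - ((\<Sum>\<theta>\<in>?T. \<theta> * A \<theta> z) - (\<Sum>\<theta>\<in>?T. \<theta> * A \<theta> z'))"
  proof -
    have "(\<Sum>\<theta>\<in>?T. (real r - 2 - \<theta>) * (A \<theta> z - A \<theta> z')) =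
        (\<Sum>\<theta>\<in>?T. (real r - 2) * A \<theta> z - (real r - 2) * A \<theta> z' - (\<theta> * A \<theta> z - \<theta> * A \<theta> z'))"
      by (intro sum.cong) (auto simp: algebra_simps)
    then show ?thesis by (simp add: sum_subtractf sum_distrib_left right_diff_distrib)
  qed
  have l2: "(\<Sum>\<theta>\<in>?T. \<theta> * (2 * (G \<theta> z - G \<theta> z'))) = 2 * ((\<Sum>\<theta>\<in>?T. \<theta> * G \<theta> z) - (\<Sum>\<theta>\<in>?T. \<theta> * G \<theta> z'))"
  proof -
    have "(\<Sum>\<theta>\<in>?T. \<theta> * (2 * (G \<theta> z - G \<theta> z'))) = (\<Sum>\<theta>\<in>?T. 2 * (\<theta> * G \<theta> z) - 2 * (\<theta> * G \<theta> z'))"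
      by (intro sum.cong) (auto simp: algebra_simps)
    then show ?thesis by (simp add: sum_subtractf sum_distrib_left right_diff_distrib)
  qed
  have r2: "(\<Sum>\<theta>\<in>?T. \<theta> * ((real r - 2 - \<theta>) * (A \<theta> z - A \<theta> z'))) =
     (real r - 2) * ((\<Sum>\<theta>\<in>?T. \<theta> * A \<theta> z) - (\<Sum>\<theta>\<in>?T. \<theta> * A \<theta> z')) - ((\<Sum>\<theta>\<in>?T. \<theta>^2 * A \<theta> z) - (\<Sum>\<theta>\<in>?T. \<theta>^2 * A \<theta> z'))"
  proof -
    have "(\<Sum>\<theta>\<in>?T. \<theta> * ((real r - 2 - \<theta>) * (A \<theta> z - A \<theta> z'))) =
        (\<Sum>\<theta>\<in>?T. (real r - 2) * (\<theta> * A \<theta> z) - (real r - 2) * (\<theta> * A \<theta> z') - (\<theta>^2 * A \<theta> z - \<theta>^2 * A \<theta> z'))"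
      by (intro sum.cong) (auto simp: algebra_simps power2_eq_square)
    then show ?thesis by (simp add: sum_subtractf sum_distrib_left right_diff_distrib)
  qed
  show "2 * (vinner V (pz z) (Rm V E (qz z)) - vinner V (pz z') (Rm V E (qz z')))
     = (real r - 2) * (vinner V (pz z) (pz z) - vinner V (pz z') (pz z'))
       - (vinner V (pz z) (laplacian V E (pz z)) - vinner V (pz z') (laplacian V E (pz z')))"
    unfolding sA sG sLA using e1 l1 r1 by simp
  show "2 * (vinner V (laplacian V E (pz z)) (Rm V E (qz z)) - vinner V (laplacian V E (pz z')) (Rm V E (qz z')))
     = (real r - 2) * (vinner V (pz z) (laplacian V E (pz z)) - vinner V (pz z') (laplacian V E (pz z')))
       - (vinner V (laplacian V E (pz z)) (laplacian V E (pz z)) - vinner V (laplacian V E (pz z')) (laplacian V E (pz z')))"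
    unfolding sLG sLA sLLA using e2 l2 r2 by simp
qed

end



lemma cv_Inl_Inl[simp]: "char_vec (Inl x) (Inl v) = char_vec x v" unfolding char_vec_def by simp
lemma cv_Inl_Inr[simp]: "char_vec (Inl x) (Inr e) = 0" unfolding char_vec_def by simp
lemma cv_Inr_Inl[simp]: "char_vec (Inr x) (Inl v) = 0" unfolding char_vec_def by simp
lemma cv_Inr_Inr[simp]: "char_vec (Inr x) (Inr e) = char_vec x e" unfolding char_vec_def by simp

lemma pz_VV: "pz (pair_state (Inl x) (Inl y)) = pair_state x y" unfolding pz_def pair_state_def by simp
lemma qz_VV: "qz (pair_state (Inl x) (Inl y)) = (\<lambda>_. 0)" unfolding qz_def pair_state_def by simp
lemma pz_II: "pz (pair_state (Inr x) (Inr y)) = (\<lambda>_. 0)" unfolding pz_def pair_state_def by simp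
lemma qz_II: "qz (pair_state (Inr x) (Inr y)) = pair_state x y" unfolding qz_def pair_state_def by simp
lemma pz_VI: "pz (pair_state (Inl x) (Inr y)) = char_vec x" unfolding pz_def pair_state_def by simp
lemma qz_VI: "qz (pair_state (Inl x) (Inr y)) = (\<lambda>e. (-1) * char_vec y e)" unfolding qz_def pair_state_def by simp
lemma pz_IV: "pz (pair_state (Inr x) (Inl y)) = (\<lambda>v. (-1) * char_vec y v)" unfolding pz_def pair_state_def by simp
lemma qz_IV: "qz (pair_state (Inr x) (Inl y)) = char_vec x" unfolding qz_def pair_state_def by simp

lemma Rm_zero[simp]: "Rm V E (\<lambda>_. 0) = (\<lambda>_. 0)" unfolding Rm_def by (rule ext) simp
lemma lap_zero[simp]: "laplacian V E (\<lambda>_. 0) = (\<lambda>_. 0)" unfolding laplacian_def by (rule ext) simp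

lemma eig_proj_zero:
  assumes "finite V" shows "eig_proj V E \<theta> (\<lambda>_. 0) = (\<lambda>_. 0)"
proof (rule eig_proj_eqI[OF assms])
  show "(\<lambda>_. 0) \<in> lap_eigenspace V E \<theta>" using eigsp_subsp unfolding subsp_def by blast
  show "\<forall>w\<in>lap_eigenspace V E \<theta>. vinner V (\<lambda>u. 0 - 0) w = 0" by simp
qed

context
  fixes V :: "'v set" and E :: "'v \<Rightarrow> 'v \<Rightarrow> bool" and r :: nat
  assumes reg: "regular_graph V E r"
begin

lemma lap_cv: "v \<in> V \<Longrightarrow> c \<in> V \<Longrightarrow> laplacian V E (char_vec c) v = real r * char_vec c v - (if E v c then 1 else 0)"
proof -
  assume v: "v \<in> V" and c: "c \<in> V"
  have "(\<Sum>w\<in>{w \<in> V. E v w}. char_vec c w) = (if E v c then 1 else 0)"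
  proof -
    have "(\<Sum>w\<in>{w \<in> V. E v w}. char_vec c w) = (\<Sum>w\<in>{w \<in> V. E v w}. if w = c then 1 else 0)"
      unfolding char_vec_def by (intro sum.cong) auto
    also have "\<dots> = (if c \<in> {w \<in> V. E v w} then 1 else 0)" using finV[OF reg] by (simp add: sum.delta')
    finally show ?thesis using c by simp
  qed
  then show ?thesis using lap_eq[OF reg v] by simp
qed

lemma cv_norm: "c \<in> V \<Longrightarrow> vinner V (char_vec c) (char_vec c) = 1"
  using vinner_char_left[OF finV[OF reg]] by (simp add: char_vec_def)

lemma not_Ecc: "\<not> E c c" using EV[OF reg, of c c] by blast

lemma lap_cv': "v \<in> V \<Longrightarrow> c \<in> V \<Longrightarrow> laplacian V E (char_vec c) v = (if v = c then real r else 0) - (if E c v then 1 else 0)"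
  using lap_cv[of v c] not_Ecc[of c] Esym[OF reg, of v c] Esym[OF reg, of c v] by (auto simp: char_vec_def)

lemma cv_lap: "c \<in> V \<Longrightarrow> vinner V (char_vec c) (laplacian V E (char_vec c)) = real r"
  using vinner_char_left[OF finV[OF reg]] lap_cv'[of c c] not_Ecc[of c] by simp

lemma cv_lap2: "c \<in> V \<Longrightarrow> vinner V (laplacian V E (char_vec c)) (laplacian V E (char_vec c)) = real r ^ 2 + real r"
proof -
  assume c: "c \<in> V"
  have "vinner V (laplacian V E (char_vec c)) (laplacian V E (char_vec c))
      = (\<Sum>v\<in>V. (if v = c then real r ^ 2 else 0) + (if E c v then 1 else 0))"
  proof (unfold vinner_def, intro sum.cong refl)
    fix v assume v: "v \<in> V"
    show "laplacian V E (char_vec c) v * laplacian V E (char_vec c) v = (if v = c then real r ^ 2 else 0) + (if E c v then 1 else 0)"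
      unfolding lap_cv'[OF v c] using not_Ecc[of c] by (cases "v = c") (auto simp: power2_eq_square)
  qed
  also have "\<dots> = real r ^ 2 + real (card {w \<in> V. E c w})"
    using finV[OF reg] c by (simp add: sum.distrib sum.delta' sum.If_cases Int_def conj_commute)
  finally show ?thesis using deg[OF reg c] by simp
qed

lemma pair_split: "pair_state x y = (\<lambda>u. 1 * char_vec x u + (-1) * char_vec y u)"
  unfolding pair_state_def by simp

lemma pair_norm: "x \<in> V \<Longrightarrow> y \<in> V \<Longrightarrow> x \<noteq> y \<Longrightarrow> vinner V (pair_state x y) (pair_state x y) = 2"
  unfolding pair_split vinner_add_left vinner_scale_left vinner_add_right vinner_scale_right
  using vinner_char_left[OF finV[OF reg]] by (simp add: char_vec_def)

lemma pair_lap: "x \<in> V \<Longrightarrow> y \<in> V \<Longrightarrow> x \<noteq> y \<Longrightarrow> vinner V (pair_state x y) (laplacian V E (pair_state x y)) \<ge> 2 * real r"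
proof -
  assume x: "x \<in> V" and y: "y \<in> V" and ne: "x \<noteq> y"
  have L: "laplacian V E (pair_state x y) = (\<lambda>u. 1 * laplacian V E (char_vec x) u + (-1) * laplacian V E (char_vec y) u)"
    unfolding pair_split by (rule lap_lin)
  have pi: "vinner V (pair_state x y) g = g x - g y" for g
    unfolding pair_split[of x y] vinner_add_left vinner_scale_left vinner_char_left[OF finV[OF reg] x] vinner_char_left[OF finV[OF reg] y]
    by simp
  have "vinner V (pair_state x y) (laplacian V E (pair_state x y)) =
     laplacian V E (char_vec x) x - laplacian V E (char_vec y) x - laplacian V E (char_vec x) y + laplacian V E (char_vec y) y"
    unfolding pi L by simp
  also have "\<dots> = 2 * real r + (if E y x then 1 else 0) + (if E x y then 1 else 0)"
    using lap_cv'[OF x x] lap_cv'[OF x y] lap_cv'[OF y x] lap_cv'[OF y y] ne not_Ecc by simp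
  finally show ?thesis by simp
qed

lemma Rm_cv: "v \<in> V \<Longrightarrow> e \<in> edge_set E \<Longrightarrow> Rm V E (char_vec e) v = (if v \<in> e then 1 else 0)"
proof -
  assume v: "v \<in> V" and e: "e \<in> edge_set E"
  have "Rm V E (char_vec e) v = (\<Sum>f\<in>{f \<in> edge_set E. v \<in> f}. if f = e then 1 else 0)"
    unfolding Rm_def char_vec_def using v by simp
  also have "\<dots> = (if e \<in> {f \<in> edge_set E. v \<in> f} then 1 else 0)" using finES[OF reg] by (simp add: sum.delta')
  finally show ?thesis using e by simp
qed

lemma cv_Rm: "v \<in> V \<Longrightarrow> e \<in> edge_set E \<Longrightarrow> vinner V (char_vec v) (Rm V E (char_vec e)) = (if v \<in> e then 1 else 0)"
  using vinner_char_left[OF finV[OF reg]] Rm_cv by simp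

lemma lapcv_Rm: "v \<in> e \<Longrightarrow> e \<in> edge_set E \<Longrightarrow> vinner V (laplacian V E (char_vec v)) (Rm V E (char_vec e)) = real r - 1"
proof -
  assume ve: "v \<in> e" and e: "e \<in> edge_set E"
  have v: "v \<in> V" using edge_sub[OF reg e] ve by blast
  obtain w where w: "e = {v, w}" "E v w" "w \<noteq> v" "w \<in> V"
  proof -
    obtain a b where ab: "e = {a, b}" "E a b" "a \<noteq> b" "a \<in> V" "b \<in> V" using edge_cases[OF reg e] by blast
    show ?thesis
    proof (cases "v = a")
      case True then show ?thesis using that ab by auto
    next
      case False then have "v = b" using ab ve by auto
      then show ?thesis using that[of a] ab Esym[OF reg] by (auto simp: insert_commute)
    qed
  qed
  have "vinner V (laplacian V E (char_vec v)) (Rm V E (char_vec e)) = (\<Sum>u\<in>V. if u \<in> e then laplacian V E (char_vec v) u else 0)"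
    unfolding vinner_def using Rm_cv[OF _ e] by (intro sum.cong) auto
  also have "\<dots> = (\<Sum>u\<in>V \<inter> e. laplacian V E (char_vec v) u)" using finV[OF reg] by (simp add: sum.inter_restrict)
  also have "V \<inter> e = {v, w}" using w v by auto
  also have "(\<Sum>u\<in>{v, w}. laplacian V E (char_vec v) u) = laplacian V E (char_vec v) v + laplacian V E (char_vec v) w"
    using w by simp
  also have "\<dots> = real r - 1" using lap_cv'[OF v v] lap_cv'[OF w(4) v] w not_Ecc by simp
  finally show ?thesis .
qed

end

definition nrmeq :: "'v set \<Rightarrow> ('v \<Rightarrow> 'v \<Rightarrow> bool) \<Rightarrow> ('v + 'v set \<Rightarrow> real) \<Rightarrow> ('v + 'v set \<Rightarrow> real) \<Rightarrow> bool" where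
  "nrmeq V E z z' \<longleftrightarrow> (\<forall>l. lap_eigenvalue (Q_vertices V E) (Q_adj E) l \<longrightarrow>
      vinner (Q_vertices V E) (eig_proj (Q_vertices V E) (Q_adj E) l z) (eig_proj (Q_vertices V E) (Q_adj E) l z)
      = vinner (Q_vertices V E) (eig_proj (Q_vertices V E) (Q_adj E) l z') (eig_proj (Q_vertices V E) (Q_adj E) l z'))"

context
  fixes V :: "'v set" and E :: "'v \<Rightarrow> 'v \<Rightarrow> bool" and r :: nat
  assumes reg: "regular_graph V E r"
begin

lemma E1:
  assumes "nrmeq V E z z'"
  shows "2 * (vinner V (pz z) (Rm V E (qz z)) - vinner V (pz z') (Rm V E (qz z')))
     = (real r - 2) * (vinner V (pz z) (pz z) - vinner V (pz z') (pz z'))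
       - (vinner V (pz z) (laplacian V E (pz z)) - vinner V (pz z') (laplacian V E (pz z')))"
  using assms unfolding nrmeq_def by (intro spec_E(1)[OF reg]) auto

lemma E2:
  assumes "nrmeq V E z z'"
  shows "2 * (vinner V (laplacian V E (pz z)) (Rm V E (qz z)) - vinner V (laplacian V E (pz z')) (Rm V E (qz z')))
     = (real r - 2) * (vinner V (pz z) (laplacian V E (pz z)) - vinner V (pz z') (laplacian V E (pz z')))
       - (vinner V (laplacian V E (pz z)) (laplacian V E (pz z)) - vinner V (laplacian V E (pz z')) (laplacian V E (pz z')))"
  using assms unfolding nrmeq_def by (intro spec_E(2)[OF reg]) auto

lemma contra_VV_II:
  assumes x: "x \<in> V" and y: "y \<in> V" and ne: "x \<noteq> y"
    and n: "nrmeq V E (pair_state (Inl x) (Inl y)) (pair_state (Inr x') (Inr y'))"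
  shows False
proof -
  have "2 * (0 - 0) = (real r - 2) * (2 - 0) - (vinner V (pair_state x y) (laplacian V E (pair_state x y)) - 0)"
    using E1[OF n] unfolding pz_VV qz_VV pz_II qz_II using pair_norm[OF reg x y ne] by simp
  then show False using pair_lap[OF reg x y ne] by simp
qed

lemma contra_II_VV:
  assumes x: "x \<in> V" and y: "y \<in> V" and ne: "x \<noteq> y"
    and n: "nrmeq V E (pair_state (Inr x') (Inr y')) (pair_state (Inl x) (Inl y))"
  shows False
proof -
  have "2 * (0 - 0) = (real r - 2) * (0 - 2) - (0 - vinner V (pair_state x y) (laplacian V E (pair_state x y)))"
    using E1[OF n] unfolding pz_VV qz_VV pz_II qz_II using pair_norm[OF reg x y ne] by simp
  then show False using pair_lap[OF reg x y ne] by simp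
qed

lemma mixed_vals:
  assumes s: "\<sigma> * \<sigma> = 1" and v0: "v0 \<in> V" and e0: "e0 \<in> edge_set E"
    and p: "pz z = (\<lambda>v. \<sigma> * char_vec v0 v)" and q: "qz z = (\<lambda>e. (-\<sigma>) * char_vec e0 e)"
  shows "vinner V (pz z) (pz z) = 1"
    "vinner V (pz z) (laplacian V E (pz z)) = real r"
    "vinner V (laplacian V E (pz z)) (laplacian V E (pz z)) = real r ^ 2 + real r"
    "vinner V (pz z) (Rm V E (qz z)) = - (if v0 \<in> e0 then 1 else 0)"
    "v0 \<in> e0 \<Longrightarrow> vinner V (laplacian V E (pz z)) (Rm V E (qz z)) = - (real r - 1)"
proof -
  have Rq: "Rm V E (qz z) = (\<lambda>v. (-\<sigma>) * Rm V E (char_vec e0) v)" unfolding q by (rule ext, rule Rm_scale)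
  have Lp: "laplacian V E (pz z) = (\<lambda>v. \<sigma> * laplacian V E (char_vec v0) v)" unfolding p by (rule lap_scale)
  show "vinner V (pz z) (pz z) = 1" unfolding p vinner_scale_left vinner_scale_right cv_norm[OF reg v0] using s by simp
  show "vinner V (pz z) (laplacian V E (pz z)) = real r"
    unfolding Lp unfolding p vinner_scale_left vinner_scale_right cv_lap[OF reg v0] using s by simp
  show "vinner V (laplacian V E (pz z)) (laplacian V E (pz z)) = real r ^ 2 + real r"
    unfolding Lp vinner_scale_left vinner_scale_right cv_lap2[OF reg v0] using s by simp
  show "vinner V (pz z) (Rm V E (qz z)) = - (if v0 \<in> e0 then 1 else 0)"
    unfolding Rq unfolding p vinner_scale_left vinner_scale_right cv_Rm[OF reg v0 e0] using s by simp
  show "v0 \<in> e0 \<Longrightarrow> vinner V (laplacian V E (pz z)) (Rm V E (qz z)) = - (real r - 1)"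
  proof -
    assume ve: "v0 \<in> e0"
    have "vinner V (laplacian V E (pz z)) (Rm V E (qz z)) = (\<sigma> * \<sigma>) * (- (real r - 1))"
      unfolding Rq Lp vinner_scale_left vinner_scale_right lapcv_Rm[OF reg ve e0] by (simp add: algebra_simps)
    then show ?thesis using s by simp
  qed
qed

lemma contra_VV_mixed:
  assumes x: "x \<in> V" and y: "y \<in> V" and ne: "x \<noteq> y"
    and s: "\<sigma> * \<sigma> = 1" and v0: "v0 \<in> V" and e0: "e0 \<in> edge_set E"
    and p: "pz z' = (\<lambda>v. \<sigma> * char_vec v0 v)" and q: "qz z' = (\<lambda>e. (-\<sigma>) * char_vec e0 e)"
    and n: "nrmeq V E (pair_state (Inl x) (Inl y)) z'"
  shows False
proof -
  note M = mixed_vals[OF s v0 e0 p q]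
  have "2 * (0 - - (if v0 \<in> e0 then 1 else 0)) = (real r - 2) * (2 - 1) - (vinner V (pair_state x y) (laplacian V E (pair_state x y)) - real r)"
    using E1[OF n] unfolding pz_VV qz_VV M(1,2,4) using pair_norm[OF reg x y ne] by simp
  moreover have "2 * (0 - - (if v0 \<in> e0 then 1 else 0)) \<ge> (0::real)" by simp
  ultimately show False using pair_lap[OF reg x y ne] by simp
qed

lemma contra_II_mixed:
  assumes s: "\<sigma> * \<sigma> = 1" and v0: "v0 \<in> V" and e0: "e0 \<in> edge_set E"
    and p: "pz z' = (\<lambda>v. \<sigma> * char_vec v0 v)" and q: "qz z' = (\<lambda>e. (-\<sigma>) * char_vec e0 e)"
    and n: "nrmeq V E (pair_state (Inr x) (Inr y)) z'"
  shows False
proof -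
  note M = mixed_vals[OF s v0 e0 p q]
  have "2 * (0 - - (if v0 \<in> e0 then 1 else 0)) = (real r - 2) * (0 - 1) - (0 - real r)"
    using E1[OF n] unfolding pz_II qz_II M(1,2,4) by simp
  then have ve: "v0 \<in> e0" by (cases "v0 \<in> e0") auto
  have "2 * (0 - - (real r - 1)) = (real r - 2) * (0 - real r) - (0 - (real r ^ 2 + real r))"
    using E2[OF n] unfolding pz_II qz_II M(2,3) M(5)[OF ve] by simp
  then show False by (simp add: power2_eq_square algebra_simps)
qed

lemma emb_rel: "emb E c x = (\<lambda>u. s * emb E c y u) \<longleftrightarrow> x = (\<lambda>u. s * y u)"
proof
  assume h: "emb E c x = (\<lambda>u. s * emb E c y u)"
  show "x = (\<lambda>u. s * y u)"
  proof
    fix v show "x v = s * y v" using fun_cong[OF h, of "Inl v"] by simp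
  qed
next
  assume h: "x = (\<lambda>u. s * y u)"
  show "emb E c x = (\<lambda>u. s * emb E c y u)"
  proof
    fix w show "emb E c x w = s * emb E c y w"
      unfolding h by (cases w) (simp_all add: Rt_scale)
  qed
qed

lemma F_rel:
  fixes \<theta> l s :: real
  assumes root: "l^2 - (real r + 2 + \<theta>) * l + (real r + 1) * \<theta> = 0" and ne: "l \<noteq> 2 * real r + 2"
    and le: "\<theta> \<le> 2 * real r"
  shows "eig_proj (Q_vertices V E) (Q_adj E) l z = (\<lambda>u. s * eig_proj (Q_vertices V E) (Q_adj E) l w u)
     \<longleftrightarrow> Xv V E r \<theta> l z = (\<lambda>u. s * Xv V E r \<theta> l w u)"
proof -
  let ?d = "1 + (cc r l)^2 * (2 * real r - \<theta>)"
  have dpos: "?d > 0" using le by (smt (verit) mult_nonneg_nonneg zero_le_power2)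
  have "eig_proj (Q_vertices V E) (Q_adj E) l z = (\<lambda>u. s * eig_proj (Q_vertices V E) (Q_adj E) l w u)
     \<longleftrightarrow> (\<lambda>u. (1 / ?d) * Xv V E r \<theta> l z u) = (\<lambda>u. s * ((1 / ?d) * Xv V E r \<theta> l w u))"
    unfolding projQ[OF reg root ne le] emb_rel ..
  also have "\<dots> \<longleftrightarrow> Xv V E r \<theta> l z = (\<lambda>u. s * Xv V E r \<theta> l w u)"
    using dpos by (simp add: fun_eq_iff field_simps)
  finally show ?thesis .
qed

lemma Xv_VV: "Xv V E r \<theta> l (pair_state (Inl x) (Inl y)) = eig_proj V E \<theta> (pair_state x y)"
proof -
  have "(\<lambda>v. pair_state (Inl x) (Inl y) (Inl v) + cc r l * Rm V E (\<lambda>e. pair_state (Inl x) (Inl y) (Inr e)) v) = pair_state x y"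
    unfolding pair_state_def by (simp add: char_vec_def)
  then show ?thesis unfolding Xv_def[OF reg] by (rule arg_cong)
qed

lemma Xv_II: "Xv V E r \<theta> l (pair_state (Inr x) (Inr y)) = (\<lambda>u. cc r l * eig_proj V E \<theta> (Rm V E (pair_state x y)) u)"
proof -
  have "(\<lambda>v. pair_state (Inr x) (Inr y) (Inl v) + cc r l * Rm V E (\<lambda>e. pair_state (Inr x) (Inr y) (Inr e)) v)
      = (\<lambda>v. cc r l * Rm V E (pair_state x y) v)"
    unfolding pair_state_def by (simp add: char_vec_def)
  then have "eig_proj V E \<theta> (\<lambda>v. pair_state (Inr x) (Inr y) (Inl v) + cc r l * Rm V E (\<lambda>e. pair_state (Inr x) (Inr y) (Inr e)) v)
      = eig_proj V E \<theta> (\<lambda>v. cc r l * Rm V E (pair_state x y) v)" by (rule arg_cong)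
  also have "\<dots> = (\<lambda>u. cc r l * eig_proj V E \<theta> (Rm V E (pair_state x y)) u)" by (rule eig_proj_scale[OF finV[OF reg]])
  finally show ?thesis unfolding Xv_def[OF reg] .
qed

lemma memb:
  fixes \<theta> l k :: real
  assumes root: "l^2 - (real r + 2 + \<theta>) * l + (real r + 1) * \<theta> = 0" and ne: "l \<noteq> 2 * real r + 2"
    and le: "\<theta> \<le> 2 * real r" and evQ: "lap_eigenvalue (Q_vertices V E) (Q_adj E) l" and k: "k \<noteq> 0"
    and Xz: "Xv V E r \<theta> l z = (\<lambda>u. k * U u)" and Xz': "Xv V E r \<theta> l z' = (\<lambda>u. k * U' u)"
  shows "l \<in> lap_supp (Q_vertices V E) (Q_adj E) z \<longleftrightarrow> U \<noteq> (\<lambda>_. 0)"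
    "eig_proj (Q_vertices V E) (Q_adj E) l z = eig_proj (Q_vertices V E) (Q_adj E) l z' \<longleftrightarrow> U = U'"
    "eig_proj (Q_vertices V E) (Q_adj E) l z = (\<lambda>u. - eig_proj (Q_vertices V E) (Q_adj E) l z' u) \<longleftrightarrow> U = (\<lambda>u. - U' u)"
proof -
  note FR = F_rel[OF root ne le]
  have "eig_proj (Q_vertices V E) (Q_adj E) l z = (\<lambda>_. 0) \<longleftrightarrow>
        eig_proj (Q_vertices V E) (Q_adj E) l z = (\<lambda>u. 0 * eig_proj (Q_vertices V E) (Q_adj E) l z u)" by simp
  also have "\<dots> \<longleftrightarrow> Xv V E r \<theta> l z = (\<lambda>u. 0 * Xv V E r \<theta> l z u)" by (rule FR)
  also have "\<dots> \<longleftrightarrow> U = (\<lambda>_. 0)" unfolding Xz using k by (simp add: fun_eq_iff)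
  finally show "l \<in> lap_supp (Q_vertices V E) (Q_adj E) z \<longleftrightarrow> U \<noteq> (\<lambda>_. 0)"
    unfolding lap_supp_def using evQ by simp
  have "eig_proj (Q_vertices V E) (Q_adj E) l z = eig_proj (Q_vertices V E) (Q_adj E) l z' \<longleftrightarrow>
        eig_proj (Q_vertices V E) (Q_adj E) l z = (\<lambda>u. 1 * eig_proj (Q_vertices V E) (Q_adj E) l z' u)" by simp
  also have "\<dots> \<longleftrightarrow> Xv V E r \<theta> l z = (\<lambda>u. 1 * Xv V E r \<theta> l z' u)" by (rule FR)
  also have "\<dots> \<longleftrightarrow> U = U'" unfolding Xz Xz' using k by (simp add: fun_eq_iff)
  finally show "eig_proj (Q_vertices V E) (Q_adj E) l z = eig_proj (Q_vertices V E) (Q_adj E) l z' \<longleftrightarrow> U = U'" .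
  have "eig_proj (Q_vertices V E) (Q_adj E) l z = (\<lambda>u. - eig_proj (Q_vertices V E) (Q_adj E) l z' u) \<longleftrightarrow>
        eig_proj (Q_vertices V E) (Q_adj E) l z = (\<lambda>u. (-1) * eig_proj (Q_vertices V E) (Q_adj E) l z' u)" by simp
  also have "\<dots> \<longleftrightarrow> Xv V E r \<theta> l z = (\<lambda>u. (-1) * Xv V E r \<theta> l z' u)" by (rule FR)
  also have "\<dots> \<longleftrightarrow> U = (\<lambda>u. - U' u)"
  proof -
    have "k * U x = - (k * U' x) \<longleftrightarrow> U x = - U' x" for x
      using k by (metis minus_mult_right mult_left_cancel)
    then show ?thesis unfolding Xz Xz' by (simp add: fun_eq_iff)
  qed
  finally show "eig_proj (Q_vertices V E) (Q_adj E) l z = (\<lambda>u. - eig_proj (Q_vertices V E) (Q_adj E) l z' u) \<longleftrightarrow> U = (\<lambda>u. - U' u)" .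
qed

lemma sc_nrm:
  assumes "lap_strongly_cospectral (Q_vertices V E) (Q_adj E) a b c d"
  shows "nrmeq V E (pair_state a b) (pair_state c d)"
  unfolding nrmeq_def
proof (intro allI impI)
  fix l assume "lap_eigenvalue (Q_vertices V E) (Q_adj E) l"
  then have "eig_proj (Q_vertices V E) (Q_adj E) l (pair_state a b) = eig_proj (Q_vertices V E) (Q_adj E) l (pair_state c d) \<or>
      eig_proj (Q_vertices V E) (Q_adj E) l (pair_state a b) = (\<lambda>u. - eig_proj (Q_vertices V E) (Q_adj E) l (pair_state c d) u)"
    using assms unfolding lap_strongly_cospectral_def by blast
  then show "vinner (Q_vertices V E) (eig_proj (Q_vertices V E) (Q_adj E) l (pair_state a b)) (eig_proj (Q_vertices V E) (Q_adj E) l (pair_state a b)) =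
         vinner (Q_vertices V E) (eig_proj (Q_vertices V E) (Q_adj E) l (pair_state c d)) (eig_proj (Q_vertices V E) (Q_adj E) l (pair_state c d))"
    by (elim disjE) (simp_all add: vinner_def)
qed

lemma core:
  fixes \<theta> :: real and a b :: "'v + 'v set" and U :: "'v \<Rightarrow> real" and k :: "real \<Rightarrow> real"
  assumes eig: "lap_eigenvalue V E \<theta>" and ne: "\<theta> \<noteq> 2 * real r"
    and kz: "\<And>l. l \<in> {theta_plus r \<theta>, theta_minus r \<theta>} \<Longrightarrow> k l \<noteq> 0 \<and> Xv V E r \<theta> l (pair_state a b) = (\<lambda>u. k l * U u)"
    and partner: "\<And>c d. c \<in> Q_vertices V E \<Longrightarrow> d \<in> Q_vertices V E \<Longrightarrow> c \<noteq> d \<Longrightarrow>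
        lap_strongly_cospectral (Q_vertices V E) (Q_adj E) a b c d \<Longrightarrow>
        \<exists>U'. \<forall>l\<in>{theta_plus r \<theta>, theta_minus r \<theta>}. Xv V E r \<theta> l (pair_state c d) = (\<lambda>u. k l * U' u)"
  shows "(theta_plus r \<theta> \<in> lap_supp (Q_vertices V E) (Q_adj E) (pair_state a b) \<longleftrightarrow>
          theta_minus r \<theta> \<in> lap_supp (Q_vertices V E) (Q_adj E) (pair_state a b))
    \<and> (\<forall>c d. c \<in> Q_vertices V E \<longrightarrow> d \<in> Q_vertices V E \<longrightarrow> c \<noteq> d \<longrightarrow> lap_strongly_cospectral (Q_vertices V E) (Q_adj E) a b c d \<longrightarrow>
          (theta_plus r \<theta> \<in> Lambda_plus (Q_vertices V E) (Q_adj E) a b c d \<longleftrightarrow> theta_minus r \<theta> \<in> Lambda_plus (Q_vertices V E) (Q_adj E) a b c d)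
        \<and> (theta_plus r \<theta> \<in> Lambda_minus (Q_vertices V E) (Q_adj E) a b c d \<longleftrightarrow> theta_minus r \<theta> \<in> Lambda_minus (Q_vertices V E) (Q_adj E) a b c d))"
proof -
  let ?L = "{theta_plus r \<theta>, theta_minus r \<theta>}"
  obtain x0 where x0: "x0 \<in> lap_eigenspace V E \<theta>" "x0 \<noteq> (\<lambda>_. 0)" using eig unfolding lap_eigenvalue_def by blast
  have le: "\<theta> \<le> 2 * real r" by (rule eig_le_2r[OF reg x0])
  have rn: "l^2 - (real r + 2 + \<theta>) * l + (real r + 1) * \<theta> = 0 \<and> l \<noteq> 2 * real r + 2
      \<and> lap_eigenvalue (Q_vertices V E) (Q_adj E) l" if "l \<in> ?L" for l
  proof -
    have root: "l^2 - (real r + 2 + \<theta>) * l + (real r + 1) * \<theta> = 0" using that theta_pm_root by auto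
    have n: "l \<noteq> 2 * real r + 2" by (rule root_ne_2r2[OF root ne])
    show ?thesis using root n eigQ_ev[OF reg root n eig] by simp
  qed
  have M: "(l \<in> lap_supp (Q_vertices V E) (Q_adj E) (pair_state a b) \<longleftrightarrow> U \<noteq> (\<lambda>_. 0))
     \<and> (eig_proj (Q_vertices V E) (Q_adj E) l (pair_state a b) = eig_proj (Q_vertices V E) (Q_adj E) l z' \<longleftrightarrow> U = U')
     \<and> (eig_proj (Q_vertices V E) (Q_adj E) l (pair_state a b) = (\<lambda>u. - eig_proj (Q_vertices V E) (Q_adj E) l z' u) \<longleftrightarrow> U = (\<lambda>u. - U' u))"
    if l: "l \<in> ?L" and Xz': "Xv V E r \<theta> l z' = (\<lambda>u. k l * U' u)" for l z' U'
  proof -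
    have R: "l^2 - (real r + 2 + \<theta>) * l + (real r + 1) * \<theta> = 0" "l \<noteq> 2 * real r + 2"
      "lap_eigenvalue (Q_vertices V E) (Q_adj E) l" using rn[OF l] by auto
    have K: "k l \<noteq> 0" "Xv V E r \<theta> l (pair_state a b) = (\<lambda>u. k l * U u)" using kz[OF l] by auto
    show ?thesis using memb[OF R(1,2) le R(3) K(1) K(2) Xz'] by blast
  qed
  have l1: "theta_plus r \<theta> \<in> ?L" and l2: "theta_minus r \<theta> \<in> ?L" by auto
  have Xs: "Xv V E r \<theta> l (pair_state a b) = (\<lambda>u. k l * U u)" if "l \<in> ?L" for l using kz[OF that] by auto
  show ?thesis
  proof (intro conjI allI impI)
    show "theta_plus r \<theta> \<in> lap_supp (Q_vertices V E) (Q_adj E) (pair_state a b) \<longleftrightarrow>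
          theta_minus r \<theta> \<in> lap_supp (Q_vertices V E) (Q_adj E) (pair_state a b)"
      using M[OF l1 Xs[OF l1]] M[OF l2 Xs[OF l2]] by blast
  next
    fix c d assume c: "c \<in> Q_vertices V E" and d: "d \<in> Q_vertices V E" and cd: "c \<noteq> d"
      and sc: "lap_strongly_cospectral (Q_vertices V E) (Q_adj E) a b c d"
    obtain U' where U': "\<forall>l\<in>?L. Xv V E r \<theta> l (pair_state c d) = (\<lambda>u. k l * U' u)" using partner[OF c d cd sc] by blast
    note M1 = M[OF l1 U'[rule_format, OF l1]] and M2 = M[OF l2 U'[rule_format, OF l2]]
    show "theta_plus r \<theta> \<in> Lambda_plus (Q_vertices V E) (Q_adj E) a b c d \<longleftrightarrow> theta_minus r \<theta> \<in> Lambda_plus (Q_vertices V E) (Q_adj E) a b c d"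
      unfolding Lambda_plus_def using M1 M2 by simp
    show "theta_plus r \<theta> \<in> Lambda_minus (Q_vertices V E) (Q_adj E) a b c d \<longleftrightarrow> theta_minus r \<theta> \<in> Lambda_minus (Q_vertices V E) (Q_adj E) a b c d"
      unfolding Lambda_minus_def using M1 M2 by simp
  qed
qed

end

theorem theorem3p1:
  fixes V :: "'v set" and E :: "'v \<Rightarrow> 'v \<Rightarrow> bool" and r :: nat and \<theta> :: real
    and a b :: "'v + 'v set"
  defines "QV \<equiv> Q_vertices V E" and "QE \<equiv> Q_adj E"
  assumes reg: "regular_graph V E r" and r2: "r \<ge> 2"
    and eig: "lap_eigenvalue V E \<theta>" and ne: "\<theta> \<noteq> 2 * real r"
    and ab: "a \<in> QV" "b \<in> QV" "a \<noteq> b"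
    and same: "(a \<in> Inl ` V \<and> b \<in> Inl ` V) \<or> (a \<in> Inr ` edge_set E \<and> b \<in> Inr ` edge_set E)"
  shows "(theta_plus r \<theta> \<in> lap_supp QV QE (pair_state a b) \<longleftrightarrow>
          theta_minus r \<theta> \<in> lap_supp QV QE (pair_state a b))
    \<and> (\<forall>c d. c \<in> QV \<longrightarrow> d \<in> QV \<longrightarrow> c \<noteq> d \<longrightarrow> lap_strongly_cospectral QV QE a b c d \<longrightarrow>
          (theta_plus r \<theta> \<in> Lambda_plus QV QE a b c d \<longleftrightarrow> theta_minus r \<theta> \<in> Lambda_plus QV QE a b c d)
        \<and> (theta_plus r \<theta> \<in> Lambda_minus QV QE a b c d \<longleftrightarrow> theta_minus r \<theta> \<in> Lambda_minus QV QE a b c d))"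
proof -
  have a1: "a \<in> Q_vertices V E" and b1: "b \<in> Q_vertices V E" using ab unfolding QV_def by auto
  have QVcases: "\<And>x. x \<in> Q_vertices V E \<Longrightarrow> (\<exists>x'. x = Inl x' \<and> x' \<in> V) \<or> (\<exists>x'. x = Inr x' \<and> x' \<in> edge_set E)"
    unfolding Q_vertices_def by auto
  have L: "\<And>l. l \<in> {theta_plus r \<theta>, theta_minus r \<theta>} \<Longrightarrow>
      l^2 - (real r + 2 + \<theta>) * l + (real r + 1) * \<theta> = 0 \<and> l \<noteq> 2 * real r + 2"
    using theta_pm_root root_ne_2r2[OF _ ne] by auto
  show ?thesis
  proof (cases "a \<in> Inl ` V \<and> b \<in> Inl ` V")
    case True
    then obtain a' b' where a': "a = Inl a'" "a' \<in> V" and b': "b = Inl b'" "b' \<in> V" by blast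
    have ne': "a' \<noteq> b'" using ab(3) a' b' by simp
    show ?thesis unfolding QV_def QE_def
    proof (rule core[OF reg eig ne, where k = "\<lambda>_. 1" and U = "eig_proj V E \<theta> (pair_state a' b')"])
      fix l show "1 \<noteq> (0::real) \<and> Xv V E r \<theta> l (pair_state a b) = (\<lambda>u. 1 * eig_proj V E \<theta> (pair_state a' b') u)"
        unfolding a'(1) b'(1) Xv_VV[OF reg] by simp
    next
      fix c d assume c: "c \<in> Q_vertices V E" and d: "d \<in> Q_vertices V E" and cd: "c \<noteq> d"
        and sc: "lap_strongly_cospectral (Q_vertices V E) (Q_adj E) a b c d"
      have n: "nrmeq V E (pair_state (Inl a') (Inl b')) (pair_state c d)" using sc_nrm[OF reg sc] a' b' by simp
      show "\<exists>U'. \<forall>l\<in>{theta_plus r \<theta>, theta_minus r \<theta>}. Xv V E r \<theta> l (pair_state c d) = (\<lambda>u. 1 * U' u)"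
      proof (cases "\<exists>x'. c = Inl x' \<and> x' \<in> V")
        case cV: True
        then obtain c' where c': "c = Inl c'" "c' \<in> V" by blast
        show ?thesis
        proof (cases "\<exists>x'. d = Inl x' \<and> x' \<in> V")
          case True
          then obtain d' where d': "d = Inl d'" "d' \<in> V" by blast
          show ?thesis unfolding c'(1) d'(1) Xv_VV[OF reg] by auto
        next
          case False
          then obtain d' where d': "d = Inr d'" "d' \<in> edge_set E" using QVcases[OF d] by blast
          have "False"
            by (rule contra_VV_mixed[OF reg a'(2) b'(2) ne', of 1 c' d' "pair_state c d"])
               (use n c' d' in \<open>simp_all add: pz_VI qz_VI\<close>)
          then show ?thesis ..
        qed
      next
        case False
        then obtain c' where c': "c = Inr c'" "c' \<in> edge_set E" using QVcases[OF c] by blast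
        show ?thesis
        proof (cases "\<exists>x'. d = Inl x' \<and> x' \<in> V")
          case True
          then obtain d' where d': "d = Inl d'" "d' \<in> V" by blast
          have "False"
            by (rule contra_VV_mixed[OF reg a'(2) b'(2) ne', of "-1" d' c' "pair_state c d"])
               (use n c' d' in \<open>simp_all add: pz_IV qz_IV\<close>)
          then show ?thesis ..
        next
          case False
          then obtain d' where d': "d = Inr d'" "d' \<in> edge_set E" using QVcases[OF d] by blast
          have "False" by (rule contra_VV_II[OF reg a'(2) b'(2) ne']) (use n c' d' in simp)
          then show ?thesis ..
        qed
      qed
    qed
  next
    case False
    then have "a \<in> Inr ` edge_set E \<and> b \<in> Inr ` edge_set E" using same by blast
    then obtain a' b' where a': "a = Inr a'" "a' \<in> edge_set E" and b': "b = Inr b'" "b' \<in> edge_set E" by blast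
    show ?thesis unfolding QV_def QE_def
    proof (rule core[OF reg eig ne, where k = "cc r" and U = "eig_proj V E \<theta> (Rm V E (pair_state a' b'))"])
      fix l assume l: "l \<in> {theta_plus r \<theta>, theta_minus r \<theta>}"
      have "cc r l \<noteq> 0" using alg1(1) L[OF l] by blast
      then show "cc r l \<noteq> 0 \<and> Xv V E r \<theta> l (pair_state a b) = (\<lambda>u. cc r l * eig_proj V E \<theta> (Rm V E (pair_state a' b')) u)"
        unfolding a'(1) b'(1) Xv_II[OF reg] by simp
    next
      fix c d assume c: "c \<in> Q_vertices V E" and d: "d \<in> Q_vertices V E" and cd: "c \<noteq> d"
        and sc: "lap_strongly_cospectral (Q_vertices V E) (Q_adj E) a b c d"
      have n: "nrmeq V E (pair_state (Inr a') (Inr b')) (pair_state c d)" using sc_nrm[OF reg sc] a' b' by simp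
      show "\<exists>U'. \<forall>l\<in>{theta_plus r \<theta>, theta_minus r \<theta>}. Xv V E r \<theta> l (pair_state c d) = (\<lambda>u. cc r l * U' u)"
      proof (cases "\<exists>x'. c = Inr x' \<and> x' \<in> edge_set E")
        case cI: True
        then obtain c' where c': "c = Inr c'" "c' \<in> edge_set E" by blast
        show ?thesis
        proof (cases "\<exists>x'. d = Inr x' \<and> x' \<in> edge_set E")
          case True
          then obtain d' where d': "d = Inr d'" "d' \<in> edge_set E" by blast
          show ?thesis unfolding c'(1) d'(1) Xv_II[OF reg] by auto
        next
          case False
          then obtain d' where d': "d = Inl d'" "d' \<in> V" using QVcases[OF d] by blast
          have "False"
            by (rule contra_II_mixed[OF reg, of "-1" d' c' "pair_state c d" a' b'])
               (use n c' d' in \<open>simp_all add: pz_IV qz_IV\<close>)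
          then show ?thesis ..
        qed
      next
        case False
        then obtain c' where c': "c = Inl c'" "c' \<in> V" using QVcases[OF c] by blast
        show ?thesis
        proof (cases "\<exists>x'. d = Inr x' \<and> x' \<in> edge_set E")
          case True
          then obtain d' where d': "d = Inr d'" "d' \<in> edge_set E" by blast
          have "False"
            by (rule contra_II_mixed[OF reg, of 1 c' d' "pair_state c d" a' b'])
               (use n c' d' in \<open>simp_all add: pz_VI qz_VI\<close>)
          then show ?thesis ..
        next
          case False
          then obtain d' where d': "d = Inl d'" "d' \<in> V" using QVcases[OF d] by blast
          have cd': "c' \<noteq> d'" using cd c' d' by simp
          have "False" by (rule contra_II_VV[OF reg c'(2) d'(2) cd']) (use n c' d' in simp)
          then show ?thesis ..
        qed
      qed
    qed
  qed
qed


end
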